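(* Fix $z\in(0,1/4)$. The function $x\mapsto zQ(x,0,z)$ (continued holomorphically to $\mathbb{C}\setminus[x_3,x_4]$) is holomorphic in $\mathscr{G}X$, continuous up to its boundary, and satisfies $$z\big[Q(t,0,z)-Q(\bar t,0,z)\big]=tY_0(t)-\bar tY_0(\bar t)\quad\text{for all }t\in X([y_1,y_2]).$$ The function $y\mapsto z(y+1)Q(0,y,z)$ (continued holomorphically to $\mathbb{C}\setminus[y_3,y_4]$) is holomorphic in $\mathscr{G}Y$, continuous up to its boundary, and satisfies $$z\big[(t+1)Q(0,t,z)-(\bar t+1)Q(0,\bar t,z)\big]=X_0(t)t-X_0(\bar t)\bar t\quad\text{for all }t\in Y([x_1,x_2]).$$
   Context: Gessel's walks are lattice walks in $\mathbb{Z}_+^2$ starting at $(0,0)$, with unit steps $(-1,0)$, $(1,1)$, $(1,0)$, $(-1,-1)$, never leaving $\mathbb{Z}_+^2$; $q(i,j,k)$ is the number of such walks of length $k$ ending at $(i,j)$ and $Q(x,y,z)=\sum q(i,j,k)x^iy^jz^k$. Fix $z\in(0,1/4)$; $\tilde a(y)=zy(y+1)$, $\tilde b(y)=-y$, $\tilde c(y)=z(y+1)$, $a(x)=zx^2$, $b(x)=zx^2-x+z$, $c(x)=z$, $\tilde d=\tilde b^2-4\tilde a\tilde c$, $d=b^2-4ac$. Roots: $y_1=0$, $y_2=[1-8z^2-(1-16z^2)^{1/2}]/(8z^2)$, $y_3=[1-8z^2+(1-16z^2)^{1/2}]/(8z^2)$, $y_4=\infty$; $x_1=[1+2z-(1+4z)^{1/2}]/(2z)$,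 $x_2=[1-2z-(1-4z)^{1/2}]/(2z)$, $x_3=[1-2z+(1-4z)^{1/2}]/(2z)$, $x_4=[1+2z+(1+4z)^{1/2}]/(2z)$. $X_0,X_1$ are the branches $(-\tilde b\pm\tilde d^{1/2})/(2\tilde a)$, meromorphic on $\mathbb{C}\setminus([y_1,y_2]\cup[y_3,y_4])$ with $|X_0|\le|X_1|$; $Y_0,Y_1$ are the branches $(-b\pm d^{1/2})/(2a)$, meromorphic on $\mathbb{C}\setminus([x_1,x_2]\cup[x_3,x_4])$ with $|Y_0|\le|Y_1|$. It is known that $zQ(x,0,z)$ and $z(y+1)Q(0,y,z)$ extend holomorphically from the unit disc to $\mathbb{C}\setminus[x_3,x_4]$ and $\mathbb{C}\setminus[y_3,y_4]$ respectively. For $y\in[y_1,y_2]$, $\tilde d(y)\le0$ and the limits of $X_0$ from the upper/lower half-plane are $X_0^\pm(y)=(-\tilde b(y)\mp i(-\tilde d(y))^{1/2})/(2\tilde a(y))$; $X([y_1,y_2])=\{X_0^\pm(y):y\in[y_1,y_2]\}$, a curve symmetric with respect to the real axis and containing $\infty$. Likewise $Y([x_1,x_2])=\{Y_0^\pm(x):x\in[x_1,x_2]\}$ with $Y_0^\pm(x)=(-b(x)\mp i(-d(x))^{1/2})/(2a(x))$, a closed curve. Each of these curves splits $\mathbb{C}$ into two connected components; $\mathscr{G}X$ denotes the one of $\mathbb{C}\setminus X([y_1,y_2])$ containing $x_1$, and $\mathscr{G}Y$ the one of $\mathbb{C}\setminus Y([x_1,x_2])$ containing $y_1$; one has $\mathscr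 GX\subset\mathbb{C}\setminus[x_3,x_4]$ and $\mathscr GY\subset\mathbb{C}\setminus[y_3,y_4]$. *)

theory Defs
  imports "HOL-Analysis.Analysis"
begin

text \<open>Number of Gessel walks of length k from (0,0) to (i,j) staying in the quarter plane,
  with steps (-1,0),(1,1),(1,0),(-1,-1).  Written qw k i j (= q(i,j,k) in the paper).\<close>
fun qw :: "nat \<Rightarrow> int \<Rightarrow> int \<Rightarrow> nat" where
  "qw 0 i j = (if i = 0 \<and> j = 0 then 1 else 0)"
| "qw (Suc k) i j =
     (if i < 0 \<or> j < 0 then 0
      else qw k (i + 1) j + qw k (i - 1) (j - 1) + qw k (i - 1) j + qw k (i + 1) (j + 1))"

text \<open>Generating function Q(x,y,z) = sum q(i,j,k) x^i y^j z^k (note i,j \<le> k).\<close>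
definition Qgf :: "complex \<Rightarrow> complex \<Rightarrow> real \<Rightarrow> complex" where
  "Qgf x y z = (\<Sum>k. \<Sum>i\<le>k. \<Sum>j\<le>k.
      of_nat (qw k (int i) (int j)) * x ^ i * y ^ j * complex_of_real z ^ k)"

definition atil :: "real \<Rightarrow> 'a::real_field \<Rightarrow> 'a" where "atil z y = of_real z * y * (y + 1)"
definition btil :: "real \<Rightarrow> 'a::real_field \<Rightarrow> 'a" where "btil z y = - y"
definition ctil :: "real \<Rightarrow> 'a::real_field \<Rightarrow> 'a" where "ctil z y = of_real z * (y + 1)"
definition dtil :: "real \<Rightarrow> 'a::real_field \<Rightarrow> 'a" where "dtil z y = (btil z y)^2 - 4 * atil z y * ctil z y"

definition ak :: "real \<Rightarrow> 'a::real_field \<Rightarrow> 'a" where "ak z x = of_real z * x^2"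
definition bk :: "real \<Rightarrow> 'a::real_field \<Rightarrow> 'a" where "bk z x = of_real z * x^2 - x + of_real z"
definition ck :: "real \<Rightarrow> 'a::real_field \<Rightarrow> 'a" where "ck z x = of_real z"
definition dk :: "real \<Rightarrow> 'a::real_field \<Rightarrow> 'a" where "dk z x = (bk z x)^2 - 4 * ak z x * ck z x"

definition y1 :: "real \<Rightarrow> real" where "y1 z = 0"
definition y2 :: "real \<Rightarrow> real" where "y2 z = (1 - 8*z^2 - sqrt (1 - 16*z^2)) / (8*z^2)"
definition y3 :: "real \<Rightarrow> real" where "y3 z = (1 - 8*z^2 + sqrt (1 - 16*z^2)) / (8*z^2)"
definition x1 :: "real \<Rightarrow> real" where "x1 z = (1 + 2*z - sqrt (1 + 4*z)) / (2*z)"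
definition x2 :: "real \<Rightarrow> real" where "x2 z = (1 - 2*z - sqrt (1 - 4*z)) / (2*z)"
definition x3 :: "real \<Rightarrow> real" where "x3 z = (1 - 2*z + sqrt (1 - 4*z)) / (2*z)"
definition x4 :: "real \<Rightarrow> real" where "x4 z = (1 + 2*z + sqrt (1 + 4*z)) / (2*z)"

definition X0 :: "real \<Rightarrow> complex \<Rightarrow> complex" where
  "X0 z y = (let r1 = (- btil z y + csqrt (dtil z y)) / (2 * atil z y);
                 r2 = (- btil z y - csqrt (dtil z y)) / (2 * atil z y)
             in if cmod r1 \<le> cmod r2 then r1 else r2)"

definition Y0 :: "real \<Rightarrow> complex \<Rightarrow> complex" where
  "Y0 z x = (let r1 = (- bk z x + csqrt (dk z x)) / (2 * ak z x);
                 r2 = (- bk z x - csqrt (dk z x)) / (2 * ak z x)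
             in if cmod r1 \<le> cmod r2 then r1 else r2)"

definition X0pm :: "real \<Rightarrow> real \<Rightarrow> real \<Rightarrow> complex" where
  "X0pm s z y = (complex_of_real (- btil z y) - s * \<i> * complex_of_real (sqrt (- dtil z y)))
                 / complex_of_real (2 * atil z y)"

definition Y0pm :: "real \<Rightarrow> real \<Rightarrow> real \<Rightarrow> complex" where
  "Y0pm s z x = (complex_of_real (- bk z x) - s * \<i> * complex_of_real (sqrt (- dk z x)))
                 / complex_of_real (2 * ak z x)"

text \<open>Finite points of X([y1,y2]); the point at infinity (y = y1 = 0, where at vanishes) is
  omitted since it is not a point of the complex plane.\<close>
definition Xcurve :: "real \<Rightarrow> complex set" where
  "Xcurve z = {X0pm s z y | s y. s \<in> {1, -1} \<and> y \<in> {y1 z..y2 z} \<and> atil z y \<noteq> 0}"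

definition Ycurve :: "real \<Rightarrow> complex set" where
  "Ycurve z = {Y0pm s z x | s x. s \<in> {1, -1} \<and> x \<in> {x1 z..x2 z}}"

definition GX :: "real \<Rightarrow> complex set" where
  "GX z = connected_component_set (- Xcurve z) (complex_of_real (x1 z))"

definition GY :: "real \<Rightarrow> complex set" where
  "GY z = connected_component_set (- Ycurve z) (complex_of_real (y1 z))"

end

theory Submission
  imports Defs "HOL-Complex_Analysis.Complex_Analysis"
begin


lemma qw_neg: "i < 0 \<or> j < 0 \<Longrightarrow> qw k i j = 0"
  by (cases k) auto

lemma qw_big: "i > int k \<or> j > int k \<Longrightarrow> qw k i j = 0"
proof (induction k arbitrary: i j)
  case 0 then show ?case by auto
next
  case (Suc k)
  then show ?case by (auto simp: Suc.IH)
qed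

definition Pn :: "nat \<Rightarrow> nat \<Rightarrow> complex \<Rightarrow> complex \<Rightarrow> complex" where
  "Pn N k x y = (\<Sum>i\<le>N. \<Sum>j\<le>N. of_nat (qw k (int i) (int j)) * x ^ i * y ^ j)"

definition Rw :: "nat \<Rightarrow> nat \<Rightarrow> int \<Rightarrow> complex \<Rightarrow> complex" where
  "Rw N k i y = (\<Sum>j\<le>N. of_nat (qw k i (int j)) * y ^ j)"

lemma Pn_Rw: "Pn N k x y = (\<Sum>i\<le>N. Rw N k (int i) y * x ^ i)"
  unfolding Pn_def Rw_def by (simp add: sum_distrib_right sum_distrib_left mult_ac)

lemma shiftdown:
  fixes f :: "int \<Rightarrow> complex"
  assumes "f (-1) = 0" "f (int N) = 0" "N \<ge> 1"
  shows "(\<Sum>j\<le>N. f (int j - 1) * w ^ j) = w * (\<Sum>j\<le>N. f (int j) * w ^ j)"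
proof -
  obtain M where N: "N = Suc M" using assms(3) by (cases N) auto
  have "(\<Sum>j\<le>N. f (int j - 1) * w ^ j) = f (-1) + (\<Sum>j\<le>M. f (int (Suc j) - 1) * w ^ (Suc j))"
    unfolding N by (subst sum.atMost_Suc_shift) simp
  also have "\<dots> = w * (\<Sum>j\<le>M. f (int j) * w ^ j)"
    using assms(1) by (simp add: sum_distrib_left mult_ac)
  also have "\<dots> = w * (\<Sum>j\<le>N. f (int j) * w ^ j)"
    using assms(2) unfolding N by simp
  finally show ?thesis .
qed

lemma shiftup:
  fixes f :: "int \<Rightarrow> complex"
  assumes "f (int N + 1) = 0"
  shows "(\<Sum>j\<le>N. f (int j + 1) * w ^ (Suc j)) = (\<Sum>j\<le>N. f (int j) * w ^ j) - f 0"
proof -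
  have "(\<Sum>j\<le>Suc N. f (int j) * w ^ j) = f 0 + (\<Sum>j\<le>N. f (int (Suc j)) * w ^ (Suc j))"
    by (subst sum.atMost_Suc_shift) simp
  moreover have "(\<Sum>j\<le>Suc N. f (int j) * w ^ j) = (\<Sum>j\<le>N. f (int j) * w ^ j)"
    using assms by (simp add: add.commute)
  ultimately show ?thesis by (simp add: algebra_simps)
qed

lemma row_rec:
  assumes "N = Suc k" and "i \<ge> 0"
  shows "y * Rw N (Suc k) i y = (y + 1) * Rw N k (i + 1) y + (y + y^2) * Rw N k (i - 1) y
           - of_nat (qw k (i + 1) 0)"
proof -
  let ?f1 = "\<lambda>j. of_nat (qw k (i + 1) j) :: complex"
  let ?f2 = "\<lambda>j. of_nat (qw k (i - 1) j) :: complex"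
  have e: "Rw N (Suc k) i y = Rw N k (i + 1) y + Rw N k (i - 1) y
        + (\<Sum>j\<le>N. ?f2 (int j - 1) * y ^ j) + (\<Sum>j\<le>N. ?f1 (int j + 1) * y ^ j)"
    using assms(2) unfolding Rw_def by (simp add: sum.distrib algebra_simps)
  have a: "(\<Sum>j\<le>N. ?f2 (int j - 1) * y ^ j) = y * Rw N k (i - 1) y"
    unfolding Rw_def using assms(1)
    by (subst shiftdown) (auto simp: qw_neg qw_big)
  have b: "y * (\<Sum>j\<le>N. ?f1 (int j + 1) * y ^ j) = Rw N k (i + 1) y - ?f1 0"
  proof -
    have "y * (\<Sum>j\<le>N. ?f1 (int j + 1) * y ^ j) = (\<Sum>j\<le>N. ?f1 (int j + 1) * y ^ (Suc j))"
      by (simp add: sum_distrib_left mult_ac)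
    also have "\<dots> = Rw N k (i + 1) y - ?f1 0"
      unfolding Rw_def using assms(1) by (subst shiftup) (auto simp: qw_big)
    finally show ?thesis .
  qed
  show ?thesis unfolding e using a b by (simp add: algebra_simps power2_eq_square)
qed

lemma P_rec:
  assumes "N = Suc k"
  shows "x * y * Pn N (Suc k) x y = (y + x^2*y^2 + x^2*y + 1) * Pn N k x y - y * Pn N k 0 y
          - (Pn N k x 0 + Pn N k 0 y - Pn N k 0 0)"
proof -
  let ?R = "\<lambda>i. Rw N k i y"
  let ?c = "\<lambda>i. of_nat (qw k i 0) :: complex"
  have P0y: "Pn N k 0 y = ?R 0" by (simp add: Pn_Rw sum.atMost_shift)
  have Px0: "Pn N k x 0 = (\<Sum>i\<le>N. ?c (int i) * x ^ i)"
    unfolding Pn_Rw Rw_def by (simp add: sum.atMost_shift)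
  have P00: "Pn N k 0 0 = ?c 0" unfolding Pn_Rw Rw_def by (simp add: sum.atMost_shift)
  have "x * y * Pn N (Suc k) x y = (\<Sum>i\<le>N. (y * Rw N (Suc k) (int i) y) * x ^ Suc i)"
    by (simp add: Pn_Rw sum_distrib_left mult_ac)
  also have "\<dots> = (\<Sum>i\<le>N. ((y + 1) * ?R (int i + 1) + (y + y^2) * ?R (int i - 1) - ?c (int i + 1)) * x ^ Suc i)"
    using assms by (intro sum.cong refl) (simp add: row_rec)
  also have "\<dots> = (y + 1) * (\<Sum>i\<le>N. ?R (int i + 1) * x ^ Suc i)
      + (y + y^2) * x * (\<Sum>i\<le>N. ?R (int i - 1) * x ^ i) - (\<Sum>i\<le>N. ?c (int i + 1) * x ^ Suc i)"
    by (simp add: algebra_simps sum.distrib sum_subtractf sum_distrib_left power2_eq_square)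
  also have "(\<Sum>i\<le>N. ?R (int i + 1) * x ^ Suc i) = Pn N k x y - ?R 0"
    unfolding Pn_Rw using assms by (subst shiftup) (auto simp: Rw_def qw_big)
  also have "(\<Sum>i\<le>N. ?R (int i - 1) * x ^ i) = x * Pn N k x y"
    unfolding Pn_Rw using assms by (subst shiftdown) (auto simp: Rw_def qw_big qw_neg)
  also have "(\<Sum>i\<le>N. ?c (int i + 1) * x ^ Suc i) = Pn N k x 0 - ?c 0"
    unfolding Px0 using assms by (subst shiftup) (auto simp: qw_big)
  finally show ?thesis unfolding P0y P00 by (simp add: algebra_simps power2_eq_square)
qed

lemma Pn_Suc_eq: "N \<ge> k \<Longrightarrow> Pn (Suc N) k x y = Pn N k x y"
  unfolding Pn_def by (simp add: qw_big)

lemma Pn_indep: "N \<ge> k \<Longrightarrow> Pn N k x y = Pn k k x y"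
proof (induction N rule: dec_induct)
  case base then show ?case by simp
next
  case (step n) then show ?case using Pn_Suc_eq[of k n] by simp
qed

definition Pk :: "nat \<Rightarrow> complex \<Rightarrow> complex \<Rightarrow> complex" where "Pk k x y = Pn k k x y"

lemma Pk_rec: "x * y * Pk (Suc k) x y = (y + x^2*y^2 + x^2*y + 1) * Pk k x y - y * Pk k 0 y
          - (Pk k x 0 + Pk k 0 y - Pk k 0 0)"
  using P_rec[of "Suc k" k x y] Pn_indep[of k "Suc k"] unfolding Pk_def by simp

lemma Pk0: "Pk 0 x y = 1" by (simp add: Pk_def Pn_def)

definition Tn :: "nat \<Rightarrow> nat" where
  "Tn k = (\<Sum>i\<le>k. \<Sum>j\<le>k. qw k (int i) (int j))"

lemma Pk11: "Pk k 1 1 = of_nat (Tn k)" by (simp add: Pk_def Pn_def Tn_def)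

lemma Pk01: "Pk k 0 1 = of_nat (\<Sum>j\<le>k. qw k 0 (int j))"
  by (simp add: Pk_def Pn_def sum.atMost_shift)

lemma Pk10: "Pk k 1 0 = of_nat (\<Sum>i\<le>k. qw k (int i) 0)"
  by (simp add: Pk_def Pn_def sum.atMost_shift)

lemma Pk00: "Pk k 0 0 = of_nat (qw k 0 0)"
  by (simp add: Pk_def Pn_def sum.atMost_shift)

lemma Tn_bound: "Tn k \<le> 4 ^ k"
proof (induction k)
  case 0 then show ?case by (simp add: Tn_def)
next
  case (Suc k)
  have le: "qw k 0 0 \<le> (\<Sum>i\<le>k. qw k (int i) 0)"
    using member_le_sum[of 0 "{..k}" "\<lambda>i. qw k (int i) 0"] by simp
  have "Pk (Suc k) 1 1 = 4 * Pk k 1 1 - 2 * Pk k 0 1 - Pk k 1 0 + Pk k 0 0"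
    using Pk_rec[of 1 1 k] by simp
  then have "of_nat (Tn (Suc k) + 2 * (\<Sum>j\<le>k. qw k 0 (int j)) + (\<Sum>i\<le>k. qw k (int i) 0))
      = (of_nat (4 * Tn k + qw k 0 0) :: complex)"
    unfolding Pk11 Pk01 Pk10 Pk00 by (simp add: algebra_simps)
  then have "Tn (Suc k) + 2 * (\<Sum>j\<le>k. qw k 0 (int j)) + (\<Sum>i\<le>k. qw k (int i) 0) = 4 * Tn k + qw k 0 0"
    using of_nat_eq_iff by blast
  then have "Tn (Suc k) \<le> 4 * Tn k" using le by linarith
  then show ?case using Suc by simp
qed

lemma Pk_bound:
  assumes "cmod x \<le> 1" "cmod y \<le> 1"
  shows "cmod (Pk k x y) \<le> 4 ^ k"
proof -
  have "cmod (Pk k x y) \<le> (\<Sum>i\<le>k. \<Sum>j\<le>k. cmod (of_nat (qw k (int i) (int j)) * x ^ i * y ^ j))"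
    unfolding Pk_def Pn_def by (rule order.trans[OF norm_sum sum_mono]) (rule norm_sum)
  also have "\<dots> \<le> (\<Sum>i\<le>k. \<Sum>j\<le>k. real (qw k (int i) (int j)))"
  proof (intro sum_mono)
    fix i j
    have "cmod x ^ i \<le> 1" "cmod y ^ j \<le> 1" using assms by (auto intro: power_le_one)
    then have "cmod x ^ i * cmod y ^ j \<le> 1" by (intro mult_le_one) auto
    then have "real (qw k (int i) (int j)) * (cmod x ^ i * cmod y ^ j) \<le> real (qw k (int i) (int j))"
      by (rule mult_left_le) simp
    then show "cmod (of_nat (qw k (int i) (int j)) * x ^ i * y ^ j) \<le> real (qw k (int i) (int j))"
      by (simp add: norm_mult norm_power mult.assoc)
  qed
  also have "\<dots> = real (Tn k)" by (simp add: Tn_def)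
  also have "\<dots> \<le> 4 ^ k" using Tn_bound[of k] by (metis of_nat_le_iff of_nat_numeral of_nat_power)
  finally show ?thesis .
qed

lemma Qgf_Pk: "Qgf x y z = (\<Sum>k. Pk k x y * complex_of_real z ^ k)"
  unfolding Qgf_def Pk_def Pn_def by (simp add: sum_distrib_right)

lemma Pk_sums:
  assumes "cmod x \<le> 1" "cmod y \<le> 1" "0 \<le> z" "z < 1/4"
  shows "(\<lambda>k. Pk k x y * complex_of_real z ^ k) sums Qgf x y z"
proof -
  have "summable (\<lambda>k. (4 * z) ^ k)" using assms by (intro summable_geometric) auto
  then have "summable (\<lambda>k. Pk k x y * complex_of_real z ^ k)"
  proof (rule summable_comparison_test'[where N = 0])
    fix k
    have "cmod (Pk k x y * complex_of_real z ^ k) \<le> 4 ^ k * z ^ k"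
      using Pk_bound[OF assms(1,2), of k] assms(3)
      by (simp add: norm_mult norm_power mult_right_mono)
    then show "norm (Pk k x y * complex_of_real z ^ k) \<le> (4 * z) ^ k"
      by (simp add: power_mult_distrib)
  qed
  then show ?thesis unfolding Qgf_Pk by (simp add: summable_sums)
qed

lemma funeq:
  assumes "cmod x \<le> 1" "cmod y \<le> 1" "0 \<le> z" "z < 1/4"
  defines "zc \<equiv> complex_of_real z"
  shows "x * y * Qgf x y z = x * y + zc * ((y + x^2*y^2 + x^2*y + 1) * Qgf x y z
        - y * Qgf 0 y z - (Qgf x 0 z + Qgf 0 y z - Qgf 0 0 z))"
proof -
  have n0: "cmod (0::complex) \<le> 1" by simp
  note s1 = Pk_sums[OF assms(1,2,3,4)]
  note s2 = Pk_sums[OF n0 assms(2,3,4)]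
  note s3 = Pk_sums[OF assms(1) n0 assms(3,4)]
  note s4 = Pk_sums[OF n0 n0 assms(3,4)]
  let ?S = "y + x^2*y^2 + x^2*y + 1"
  have SS: "(\<lambda>k. (?S * Pk k x y - y * Pk k 0 y - (Pk k x 0 + Pk k 0 y - Pk k 0 0)) * zc ^ k) sums
        (?S * Qgf x y z - y * Qgf 0 y z - (Qgf x 0 z + Qgf 0 y z - Qgf 0 0 z))"
  proof -
    from sums_diff[OF sums_diff[OF sums_mult[OF s1, of ?S] sums_mult[OF s2, of y]] sums_diff[OF sums_add[OF s3 s2] s4]]
    have "(\<lambda>k. ?S * (Pk k x y * zc ^ k) - y * (Pk k 0 y * zc ^ k) - (Pk k x 0 * zc ^ k + Pk k 0 y * zc ^ k - Pk k 0 0 * zc ^ k)) sums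
        (?S * Qgf x y z - y * Qgf 0 y z - (Qgf x 0 z + Qgf 0 y z - Qgf 0 0 z))"
      unfolding zc_def .
    moreover have "(\<lambda>k. ?S * (Pk k x y * zc ^ k) - y * (Pk k 0 y * zc ^ k) - (Pk k x 0 * zc ^ k + Pk k 0 y * zc ^ k - Pk k 0 0 * zc ^ k))
       = (\<lambda>k. (?S * Pk k x y - y * Pk k 0 y - (Pk k x 0 + Pk k 0 y - Pk k 0 0)) * zc ^ k)"
      by (rule ext) (simp only: algebra_simps)
    ultimately show ?thesis by simp
  qed
  have eq: "x * y * Pk (Suc k) x y * zc ^ Suc k = zc * ((?S * Pk k x y - y * Pk k 0 y - (Pk k x 0 + Pk k 0 y - Pk k 0 0)) * zc ^ k)" for k
  proof -
    have "x * y * Pk (Suc k) x y * zc ^ Suc k = (x * y * Pk (Suc k) x y) * (zc * zc ^ k)" by simp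
    also have "\<dots> = (?S * Pk k x y - y * Pk k 0 y - (Pk k x 0 + Pk k 0 y - Pk k 0 0)) * (zc * zc ^ k)"
      by (simp only: Pk_rec)
    finally show ?thesis by (simp only: mult_ac)
  qed
  from sums_mult[OF SS, of zc]
  have "(\<lambda>k. x * y * Pk (Suc k) x y * zc ^ Suc k) sums
        (zc * (?S * Qgf x y z - y * Qgf 0 y z - (Qgf x 0 z + Qgf 0 y z - Qgf 0 0 z)))"
    unfolding eq .
  then have "(\<lambda>k. x * y * Pk k x y * zc ^ k) sums
        (zc * (?S * Qgf x y z - y * Qgf 0 y z - (Qgf x 0 z + Qgf 0 y z - Qgf 0 0 z)) + x * y)"
    using sums_Suc_iff[of "\<lambda>k. x * y * Pk k x y * zc ^ k"] by (simp only: Pk0 power_0 mult_1_right)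
  moreover have "(\<lambda>k. x * y * Pk k x y * zc ^ k) sums (x * y * Qgf x y z)"
    using sums_mult[OF s1, of "x*y"] unfolding zc_def by (simp add: mult_ac)
  ultimately have "zc * (?S * Qgf x y z - y * Qgf 0 y z - (Qgf x 0 z + Qgf 0 y z - Qgf 0 0 z)) + x * y = x * y * Qgf x y z"
    by (rule sums_unique2)
  then show ?thesis by (simp only: add.commute)
qed



context
  fixes z :: real
  assumes z0: "0 < z" and z1: "z < 1/4"
begin

lemma zsq: "16*z^2 < 1" "z^2 > 0"
proof -
  have "z*z < (1/4)*(1/4)" using z0 z1 by (intro mult_strict_mono) auto
  then show "16*z^2 < 1" by (simp add: power2_eq_square)
  show "z^2 > 0" using z0 by simp
qed

definition "sA = sqrt (1 - 16*z^2)"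
definition "sB = sqrt (1 - 4*z)"
definition "sC = sqrt (1 + 4*z)"

lemma sA: "sA^2 = 1 - 16*z^2" "0 < sA" "sA < 1" "1 - 4*z < sA"
proof -
  show a: "sA^2 = 1 - 16*z^2" "0 < sA" using zsq by (auto simp: sA_def)
  show "sA < 1" using z0 by (simp add: sA_def)
  have "(1 - 4*z)^2 < sA^2" unfolding a using z0 z1 by (simp add: power2_eq_square algebra_simps)
  then show "1 - 4*z < sA" using a(2) by (smt (verit) power2_le_imp_le)
qed

lemma sB: "sB^2 = 1 - 4*z" "0 < sB" "sB < 1"
  using z0 z1 by (auto simp: sB_def)

lemma sC: "sC^2 = 1 + 4*z" "1 < sC"
  using z0 z1 by (auto simp: sC_def)

lemma y2_eq: "y2 z = (1 - 8*z^2 - sA)/(8*z^2)" and y3_eq: "y3 z = (1 - 8*z^2 + sA)/(8*z^2)"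
  by (simp_all add: y2_def y3_def sA_def)

lemma x_eqs: "x1 z = (1 + 2*z - sC)/(2*z)" "x2 z = (1 - 2*z - sB)/(2*z)"
   "x3 z = (1 - 2*z + sB)/(2*z)" "x4 z = (1 + 2*z + sC)/(2*z)"
  by (simp_all add: x1_def x2_def x3_def x4_def sB_def sC_def)

lemma y2_pos: "0 < y2 z"
proof -
  have "sA^2 < (1 - 8*z^2)^2" unfolding sA using zsq z0 by (simp add: power2_eq_square algebra_simps)
  moreover have "0 \<le> 1 - 8*z^2" using zsq by simp
  ultimately have "sA < 1 - 8*z^2" by (rule power2_less_imp_less)
  then show ?thesis unfolding y2_eq using zsq z0 by simp
qed

lemma y2_lt1: "y2 z < 1"
proof -
  have "sA^2 < sA" using sA(2,3) by (simp add: power2_eq_square)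
  then have "1 - 8*z^2 - sA < 8*z^2" unfolding sA by simp
  then show ?thesis unfolding y2_eq using zsq by simp
qed

lemma y3_gt1: "1 < y3 z"
proof -
  have "1 - 8*z^2 + sA > 8*z^2" using zsq sA by simp
  then show ?thesis unfolding y3_eq using zsq by simp
qed

lemma y_poly: "4*z^2*(t - y2 z)*(t - y3 z) = 4*z^2*(t+1)^2 - t"
proof -
  have "4*z^2*(t - y2 z)*(t - y3 z) = 4*z^2*t^2 - 4*z^2*(y2 z + y3 z)*t + 4*z^2*(y2 z * y3 z)"
    by (simp add: algebra_simps power2_eq_square)
  also have "4*z^2*(y2 z + y3 z) = 1 - 8*z^2" unfolding y2_eq y3_eq using zsq z0
    by (simp add: field_simps)
  also have "y2 z * y3 z = 1" unfolding y2_eq y3_eq using zsq sA(1) z0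
    by (simp add: field_simps power2_eq_square)
  finally show ?thesis by (simp add: algebra_simps power2_eq_square)
qed

lemma y2_cross: "2*z*(1 + y2 z) < 1"
proof -
  have "2*z*(1 + y2 z) = (1 - sA)/(4*z)" unfolding y2_eq using zsq z0
    by (simp add: field_simps power2_eq_square)
  also have "\<dots> < 1" using sA(4) z0 by (simp add: divide_less_eq)
  finally show ?thesis .
qed

lemma y3_cross: "2*z*(1 + y3 z) > 1"
proof -
  have "2*z*(1 + y3 z) = (1 + sA)/(4*z)" unfolding y3_eq using zsq z0
    by (simp add: field_simps power2_eq_square)
  moreover have "(1 + sA)/(4*z) > 1" using sA(2) z0 z1 by (simp add: less_divide_eq)
  ultimately show ?thesis by simp
qed

lemma x14_poly: "z*(t - x1 z)*(t - x4 z) = z*t^2 - (1+2*z)*t + z"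
proof -
  have "z*(t - x1 z)*(t - x4 z) = z*t^2 - z*(x1 z + x4 z)*t + z*(x1 z * x4 z)"
    by (simp add: algebra_simps power2_eq_square)
  also have "z*(x1 z + x4 z) = 1 + 2*z" unfolding x_eqs using z0 by (simp add: field_simps)
  also have "x1 z * x4 z = 1" unfolding x_eqs using z0 sC(1)
    by (simp add: field_simps power2_eq_square)
  finally show ?thesis by simp
qed

lemma x23_poly: "z*(t - x2 z)*(t - x3 z) = z*t^2 - (1-2*z)*t + z"
proof -
  have "z*(t - x2 z)*(t - x3 z) = z*t^2 - z*(x2 z + x3 z)*t + z*(x2 z * x3 z)"
    by (simp add: algebra_simps power2_eq_square)
  also have "z*(x2 z + x3 z) = 1 - 2*z" unfolding x_eqs using z0 by (simp add: field_simps)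
  also have "x2 z * x3 z = 1" unfolding x_eqs using z0 sB(1)
    by (simp add: field_simps power2_eq_square)
  finally show ?thesis by simp
qed

lemma x1_pos: "0 < x1 z"
proof -
  have "sC^2 < (1 + 2*z)^2" unfolding sC using z0 by (simp add: power2_eq_square algebra_simps)
  then have "sC < 1 + 2*z" using z0 by (smt (verit) power2_le_imp_le)
  then show ?thesis unfolding x_eqs using z0 by simp
qed

lemma x1_lt1: "x1 z < 1" unfolding x_eqs using z0 sC by (simp add: field_simps)

lemma x2_lt1: "x2 z < 1"
proof -
  have "sB^2 < sB" using sB(2,3) mult_strict_left_mono[of sB 1 sB] by (simp add: power2_eq_square)
  then have "1 - 4*z < sB" using sB(1) by linarith
  then show ?thesis unfolding x_eqs using z0 by (simp add: field_simps)
qed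

lemma x3_gt1: "1 < x3 z" unfolding x_eqs using z0 z1 sB by (simp add: field_simps)

lemma x2_le_x3: "x2 z \<le> x3 z" unfolding x_eqs using z0 sB by (simp add: field_simps)

lemma x3_le_x4: "x3 z \<le> x4 z"
proof -
  have "1 - 2*z + sB \<le> 1 + 2*z + sC" using z0 sB(3) sC(2) by linarith
  then show ?thesis unfolding x_eqs using z0 by (intro divide_right_mono) auto
qed


lemma y23: "4*z^2*(y2 z + y3 z) = 1 - 8*z^2" "y2 z * y3 z = 1"
proof -
  show "4*z^2*(y2 z + y3 z) = 1 - 8*z^2" unfolding y2_eq y3_eq using zsq z0
    by (simp add: field_simps)
  show "y2 z * y3 z = 1" unfolding y2_eq y3_eq using zsq sA(1) z0
    by (simp add: field_simps power2_eq_square)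
qed

lemma x23: "z*(x2 z + x3 z) = 1 - 2*z" "x2 z * x3 z = 1"
proof -
  show "z*(x2 z + x3 z) = 1 - 2*z" unfolding x_eqs using z0 by (simp add: field_simps)
  show "x2 z * x3 z = 1" unfolding x_eqs using z0 sB(1)
    by (simp add: field_simps power2_eq_square)
qed

lemma x14: "z*(x1 z + x4 z) = 1 + 2*z" "x1 z * x4 z = 1"
proof -
  show "z*(x1 z + x4 z) = 1 + 2*z" unfolding x_eqs using z0 by (simp add: field_simps)
  show "x1 z * x4 z = 1" unfolding x_eqs using z0 sC(1)
    by (simp add: field_simps power2_eq_square)
qed

end


lemma quad_root:
  fixes a b c d :: complex
  assumes "a \<noteq> 0" "d^2 = b^2 - 4*a*c"
  shows "a * ((-b + d)/(2*a))^2 + b * ((-b + d)/(2*a)) + c = 0"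
proof -
  have "a * ((-b + d)/(2*a))^2 + b * ((-b + d)/(2*a)) + c = (d^2 - (b^2 - 4*a*c)) / (4*a)"
    using assms(1) by (simp add: field_simps power2_eq_square)
  then show ?thesis using assms(2) by simp
qed

lemma vieta:
  fixes a b c d :: complex
  assumes "a \<noteq> 0" "d^2 = b^2 - 4*a*c"
  shows "((-b + d)/(2*a)) * ((-b - d)/(2*a)) = c/a" "((-b + d)/(2*a)) + ((-b - d)/(2*a)) = -b/a"
proof -
  have "((-b + d)/(2*a)) * ((-b - d)/(2*a)) = (b^2 - d^2)/(4*a^2)"
    using assms(1) by (simp add: field_simps power2_eq_square)
  also have "b^2 - d^2 = 4*a*c" using assms(2) by simp
  finally show "((-b + d)/(2*a)) * ((-b - d)/(2*a)) = c/a"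
    using assms(1) by (simp add: field_simps power2_eq_square)
  show "((-b + d)/(2*a)) + ((-b - d)/(2*a)) = -b/a"
    using assms(1) by (simp add: field_simps)
qed

lemma two_roots:
  fixes a b c w r1 r2 :: complex
  assumes "a \<noteq> 0" "r1 * r2 = c/a" "r1 + r2 = -b/a" "a*w^2 + b*w + c = 0"
  shows "w = r1 \<or> w = r2"
proof -
  have "a * ((w - r1) * (w - r2)) = a*w^2 - a*(r1 + r2)*w + a*(r1*r2)"
    by (simp add: algebra_simps power2_eq_square)
  also have "\<dots> = a*w^2 + b*w + c" using assms(1-3) by simp
  finally have "a * ((w - r1) * (w - r2)) = 0" using assms(4) by simp
  then show ?thesis using assms(1) by auto
qed

lemma select_root:
  fixes a b c r :: complex
  assumes "a \<noteq> 0" "a*r^2 + b*r + c = 0" "r \<noteq> 0" "cmod r < cmod (c/(a*r))"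
  shows "(let r1 = (-b + csqrt (b^2 - 4*a*c))/(2*a); r2 = (-b - csqrt (b^2 - 4*a*c))/(2*a)
          in if cmod r1 \<le> cmod r2 then r1 else r2) = r"
proof -
  define d where "d = csqrt (b^2 - 4*a*c)"
  have d2: "d^2 = b^2 - 4*a*c" by (simp add: d_def)
  define r1 where "r1 = (-b + d)/(2*a)"
  define r2 where "r2 = (-b - d)/(2*a)"
  have p: "r1 * r2 = c/a" and s: "r1 + r2 = -b/a" using vieta[OF assms(1) d2] by (simp_all add: r1_def r2_def)
  have L: "(let r1 = (-b + csqrt (b^2 - 4*a*c))/(2*a); r2 = (-b - csqrt (b^2 - 4*a*c))/(2*a)
          in if cmod r1 \<le> cmod r2 then r1 else r2) = (if cmod r1 \<le> cmod r2 then r1 else r2)"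
    by (simp add: Let_def r1_def r2_def d_def)
  have "r = r1 \<or> r = r2" by (rule two_roots[OF assms(1) p s assms(2)])
  then have "(if cmod r1 \<le> cmod r2 then r1 else r2) = r" 
  proof
    assume e: "r = r1"
    then have "r2 = c/(a*r)" using p assms(1,3) by (simp add: field_simps)
    then show ?thesis using e assms(4) by simp
  next
    assume e: "r = r2"
    then have "r1 = c/(a*r)" using p assms(1,3) by (simp add: field_simps)
    then show ?thesis using e assms(4) by simp
  qed
  then show ?thesis using L by metis
qed


lemma real_disc_mod:
  fixes w :: complex and a b c :: real
  assumes "a > 0" "b^2 - 4*a*c \<le> 0" "of_real a * w^2 + of_real b * w + of_real c = 0"
  shows "(cmod w)^2 = c / a"
proof -
  obtain u v where w: "w = Complex u v" by (cases w)
  have re: "a*(u^2 - v^2) + b*u + c = 0" and im: "v * (2*a*u + b) = 0"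
    using arg_cong[OF assms(3), of Re] arg_cong[OF assms(3), of Im]
    by (simp_all add: w power2_eq_square algebra_simps)
  have m: "(cmod w)^2 = u^2 + v^2" by (simp add: w cmod_def)
  show ?thesis
  proof (cases "v = 0")
    case True
    then have q: "a*u^2 + b*u = -c" using re by simp
    have "(2*a*u + b)^2 = 4*a*(a*u^2 + b*u) + b^2" by (simp add: algebra_simps power2_eq_square)
    also have "\<dots> = b^2 - 4*a*c" using q by simp
    finally have "(2*a*u + b)^2 \<le> 0" using assms(2) by simp
    then have "2*a*u + b = 0" by simp
    then have "b = -2*a*u" by simp
    then have "c = a*u^2" using q by (simp add: algebra_simps power2_eq_square)
    then show ?thesis using m True assms(1) by simp
  next
    case False
    then have "2*a*u + b = 0" using im by simp
    then have "b = -2*a*u" by simp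
    then have "a*(u^2 + v^2) = c" using re by (simp add: algebra_simps power2_eq_square)
    then show ?thesis using m assms(1) by (simp add: field_simps)
  qed
qed

lemma no_real_curve_point:
  fixes y :: complex and t :: real
  assumes "Im y \<noteq> 0" "0 \<le> t" "t < 1/4" "y = of_real t * (y + 1)^2"
  shows False
proof -
  obtain a b where y: "y = Complex a b" by (cases y)
  have b: "b \<noteq> 0" using assms(1) by (simp add: y)
  have re: "a = t*(a+1)^2 - t*b^2" and im: "(t*(2*(a+1)) - 1) * b = 0"
    using arg_cong[OF assms(4), of Re] arg_cong[OF assms(4), of Im]
    by (simp_all add: y power2_eq_square algebra_simps)
  have 1: "t*(2*(a+1)) = 1" using im b by simp
  then have tp: "t > 0" using assms(2) by (cases "t = 0") auto
  have a1: "a + 1 > 2"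
  proof (rule ccontr)
    assume "\<not> a + 1 > 2"
    then have "t*(2*(a+1)) \<le> t * 4" using tp by (intro mult_left_mono) auto
    also have "\<dots> < 1" using assms(3) by simp
    finally show False using 1 by simp
  qed
  have "t*(a+1)^2 = (t*(2*(a+1)))*(a+1)/2" by (simp add: power2_eq_square algebra_simps)
  also have "\<dots> = (a+1)/2" using 1 by (simp only: mult_1)
  finally have "t*(a+1)^2 = (a+1)/2" .
  then have "t*b^2 = (1 - a)/2" using re by simp
  moreover have "t*b^2 \<ge> 0" using tp by simp
  ultimately show False using a1 by simp
qed


lemma no_tie:
  fixes y r1 r2 :: complex and zz :: real
  assumes "Im y \<noteq> 0" "0 < zz" "zz < 1/4" "r1 * r2 = 1/y" "r1 + r2 = 1/(of_real zz * (y + 1))"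
  shows "cmod r1 \<noteq> cmod r2"
proof
  assume eq: "cmod r1 = cmod r2"
  have y0: "y \<noteq> 0" using assms(1) by auto
  have y1: "y + 1 \<noteq> 0" using assms(1) by (metis add.inverse_unique add_uminus_conv_diff diff_0 Im_complex_of_real of_real_1 uminus_complex.sel(2) neg_equal_0_iff_equal)
  have r10: "r1 \<noteq> 0" using assms(4) y0 by auto
  define u where "u = r1^2 * y"
  have "cmod u = cmod r1 * cmod r2 * cmod y" using eq by (simp add: u_def norm_mult norm_power power2_eq_square)
  also have "\<dots> = cmod (r1 * r2 * y)" by (simp add: norm_mult)
  also have "\<dots> = 1" using assms(4) y0 by simp
  finally have u1: "cmod u = 1" .
  have u0: "u \<noteq> 0" using u1 by auto
  have r2e: "r2 = 1/(y*r1)" using assms(4) r10 y0 by (simp add: field_simps)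
  have "r2^2 * y = 1/u" unfolding r2e u_def using r10 y0 by (simp add: field_simps power2_eq_square)
  also have "1/u = cnj u"
  proof -
    have "u * cnj u = of_real ((cmod u)^2)" by (rule complex_norm_square[symmetric])
    then have "u * cnj u = 1" using u1 by simp
    then show ?thesis using u0 by (simp add: field_simps)
  qed
  finally have r2y: "r2^2 * y = cnj u" .
  have "(r1 + r2)^2 * y = u + 2*(r1*r2*y) + r2^2*y" unfolding u_def by (simp add: algebra_simps power2_eq_square)
  also have "\<dots> = u + cnj u + 2" using assms(4) y0 r2y by simp
  also have "u + cnj u = of_real (2 * Re u)" by (simp add: complex_add_cnj)
  finally have A: "(r1 + r2)^2 * y = of_real (2 + 2 * Re u)" by simp
  have "(r1 + r2)^2 * y = y / (of_real (zz^2) * (y+1)^2)" unfolding assms(5)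
    by (simp add: power2_eq_square field_simps)
  with A have Y: "y = of_real ((2 + 2 * Re u) * zz^2) * (y + 1)^2" using y1 assms(2)
    by (simp add: field_simps)
  have R: "\<bar>Re u\<bar> \<le> 1" using u1 abs_Re_le_cmod[of u] by simp
  have T: "(2 + 2 * Re u) * zz^2 < 1/4"
  proof -
    have "zz^2 < 1/16" using assms(2,3) power_strict_mono[of zz "1/4" 2] by (simp add: power2_eq_square)
    moreover have "2 + 2 * Re u \<le> 4" "0 \<le> 2 + 2 * Re u" using \<open>\<bar>Re u\<bar> \<le> 1\<close> by auto
    ultimately have "(2 + 2 * Re u) * zz^2 \<le> 4 * zz^2" by (intro mult_right_mono) auto
    then show ?thesis using \<open>zz^2 < 1/16\<close> by simp
  qed
  have "0 \<le> (2 + 2 * Re u) * zz^2" using R by simp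
  from no_real_curve_point[OF assms(1) this T Y] show False .
qed



context
  fixes z :: real
  assumes z0: "0 < z" and z1: "z < 1/4"
begin

abbreviation "zc \<equiv> complex_of_real z"
abbreviation "y2c \<equiv> complex_of_real (y2 z)"
abbreviation "y3c \<equiv> complex_of_real (y3 z)"

lemma dtil_fac: "dtil z (y::complex) = - 4 * zc^2 * y * (y - y2c) * (y - y3c)"
proof -
  have s: "4*zc^2*(y2c + y3c) = 1 - 8*zc^2" and p: "y2c * y3c = 1"
    using arg_cong[OF y23(1)[OF z0 z1], of complex_of_real] arg_cong[OF y23(2)[OF z0 z1], of complex_of_real]
    by simp_all
  have "- 4 * zc^2 * y * (y - y2c) * (y - y3c) = -4*zc^2*y*y^2 + y*(4*zc^2*(y2c + y3c))*y - 4*zc^2*y*(y2c*y3c)"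
    by (simp add: algebra_simps power2_eq_square)
  also have "\<dots> = dtil z y" unfolding s p by (simp add: dtil_def atil_def btil_def ctil_def algebra_simps power2_eq_square)
  finally show ?thesis by simp
qed

definition S2 :: "complex \<Rightarrow> complex" where
  "S2 y = 2 * \<i> * zc * csqrt y * csqrt (y - y2c) * csqrt (y3c - y)"

definition X2 :: "complex \<Rightarrow> complex" where
  "X2 y = (- btil z y + \<i> * S2 y) / (2 * atil z y)"

definition X2' :: "complex \<Rightarrow> complex" where
  "X2' y = (- btil z y - \<i> * S2 y) / (2 * atil z y)"

definition V2 :: "complex set" where
  "V2 = {w. Im w \<noteq> 0 \<or> (y2 z < Re w \<and> Re w < y3 z)}"

lemma S2sq: "(\<i> * S2 y)^2 = dtil z y"
proof -
  have "(\<i> * S2 y)^2 = 4 * zc^2 * (csqrt y)^2 * (csqrt (y - y2c))^2 * (csqrt (y3c - y))^2"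
    by (simp add: S2_def power_mult_distrib)
  also have "\<dots> = - 4 * zc^2 * y * (y - y2c) * (y - y3c)" by (simp add: algebra_simps)
  finally show ?thesis using dtil_fac by simp
qed

lemma V2_open: "open V2"
proof -
  have "V2 = - {w. Im w = 0 \<and> (Re w \<le> y2 z \<or> y3 z \<le> Re w)}" by (auto simp: V2_def)
  moreover have "closed {w::complex. Im w = 0 \<and> (Re w \<le> y2 z \<or> y3 z \<le> Re w)}"
    by (intro closed_Collect_conj closed_Collect_disj closed_Collect_eq closed_Collect_le continuous_intros)
  ultimately show ?thesis by (simp add: open_Compl)
qed

lemma y23_lt: "y2 z < y3 z" using y2_lt1[OF z0 z1] y3_gt1[OF z0 z1] by simp

lemma mid_V2: "complex_of_real ((y2 z + y3 z)/2) \<in> V2"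
  using y23_lt by (simp add: V2_def)

lemma V2_connected: "connected V2"
proof (rule starlike_imp_connected)
  let ?m = "complex_of_real ((y2 z + y3 z)/2)"
  have "closed_segment ?m x \<subseteq> V2" if x: "x \<in> V2" for x
  proof
    fix w assume "w \<in> closed_segment ?m x"
    then obtain t where t: "0 \<le> t" "t \<le> 1" and w: "w = (1 - t) *\<^sub>R ?m + t *\<^sub>R x"
      by (auto simp: closed_segment_def)
    have im: "Im w = t * Im x" and re: "Re w = (1-t) * ((y2 z + y3 z)/2) + t * Re x"
      by (simp_all add: w)
    show "w \<in> V2"
    proof (cases "Im x = 0")
      case True
      then have "y2 z < Re x" "Re x < y3 z" using x by (auto simp: V2_def)
      have "y2 z < Re w"
      proof -
        have "(1-t) * y2 z \<le> (1-t) * ((y2 z + y3 z)/2)" using t y23_lt by (intro mult_left_mono) auto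
        moreover have "t * y2 z \<le> t * Re x" using t \<open>y2 z < Re x\<close> by (intro mult_left_mono) auto
        moreover have "(1-t) * y2 z < (1-t) * ((y2 z + y3 z)/2) \<or> t * y2 z < t * Re x"
          using t y23_lt \<open>y2 z < Re x\<close> by (cases "t = 0") auto
        moreover have "y2 z = (1-t)*y2 z + t*y2 z" by (simp add: algebra_simps)
        ultimately show ?thesis unfolding re by linarith
      qed
      moreover have "Re w < y3 z"
      proof -
        have "(1-t) * ((y2 z + y3 z)/2) \<le> (1-t) * y3 z" using t y23_lt by (intro mult_left_mono) auto
        moreover have "t * Re x \<le> t * y3 z" using t \<open>Re x < y3 z\<close> by (intro mult_left_mono) auto
        moreover have "(1-t) * ((y2 z + y3 z)/2) < (1-t) * y3 z \<or> t * Re x < t * y3 z"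
          using t y23_lt \<open>Re x < y3 z\<close> by (cases "t = 0") auto
        moreover have "y3 z = (1-t)*y3 z + t*y3 z" by (simp add: algebra_simps)
        ultimately show ?thesis unfolding re by linarith
      qed
      ultimately show ?thesis by (simp add: V2_def)
    next
      case False
      show ?thesis
      proof (cases "t = 0")
        case True then have "w = ?m" using w by simp
        then show ?thesis using mid_V2 by metis
      next
        case False then show ?thesis using \<open>Im x \<noteq> 0\<close> im by (simp add: V2_def)
      qed
    qed
  qed
  then show "starlike V2" unfolding starlike_def using mid_V2 by blast
qed

lemma V2_props:
  assumes "y \<in> V2"
  shows "y \<notin> \<real>\<^sub>\<le>\<^sub>0" "y - y2c \<notin> \<real>\<^sub>\<le>\<^sub>0" "y3c - y \<notin> \<real>\<^sub>\<le>\<^sub>0" "y \<noteq> 0" "y + 1 \<noteq> 0"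
    "atil z y \<noteq> 0" "\<not> (Im y = 0 \<and> y3 z \<le> Re y)"
proof -
  have p: "0 < y2 z" using y2_pos[OF z0 z1] .
  show "y \<notin> \<real>\<^sub>\<le>\<^sub>0" "y - y2c \<notin> \<real>\<^sub>\<le>\<^sub>0" "y3c - y \<notin> \<real>\<^sub>\<le>\<^sub>0" "\<not> (Im y = 0 \<and> y3 z \<le> Re y)"
    using assms p by (auto simp: V2_def complex_nonpos_Reals_iff)
  show y0: "y \<noteq> 0" using assms p by (auto simp: V2_def)
  show y1: "y + 1 \<noteq> 0"
  proof
    assume "y + 1 = 0"
    then have "y = -1" by (simp add: add_eq_0_iff2)
    then show False using assms p by (simp add: V2_def)
  qed
  show "atil z y \<noteq> 0" using y0 y1 z0 by (simp add: atil_def)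
qed

lemma S2_hol: "S2 holomorphic_on V2"
  unfolding S2_def using V2_props by (intro holomorphic_intros) auto

lemma X2_hol: "X2 holomorphic_on V2"
  unfolding X2_def btil_def atil_def using V2_props(4,5) z0
  by (intro holomorphic_intros S2_hol) auto

lemma X2'_hol: "X2' holomorphic_on V2"
  unfolding X2'_def btil_def atil_def using V2_props(4,5) z0
  by (intro holomorphic_intros S2_hol) auto

lemma X2_root: "y \<in> V2 \<Longrightarrow> atil z y * (X2 y)^2 + btil z y * X2 y + ctil z y = 0"
  unfolding X2_def using quad_root[of "atil z y" "\<i> * S2 y" "btil z y" "ctil z y"] V2_props(6) S2sq
  by (simp add: dtil_def)

lemma X2_vieta: assumes "y \<in> V2"
  shows "X2 y * X2' y = 1 / y" "X2 y + X2' y = 1 / (zc * (y + 1))"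
proof -
  have a: "atil z y \<noteq> 0" using V2_props(6)[OF assms] .
  have d: "(\<i> * S2 y)^2 = btil z y ^2 - 4 * atil z y * ctil z y" using S2sq by (simp add: dtil_def)
  note v = vieta[OF a d]
  have nz: "zc * y * (y + 1) \<noteq> 0" using a by (simp add: atil_def)
  have nz2: "zc * (y + 1) \<noteq> 0" using nz by auto
  have "X2 y * X2' y = ctil z y / atil z y" unfolding X2_def X2'_def using v(1) by simp
  also have "\<dots> = 1 / y" using V2_props(4,5)[OF assms] z0 nz by (simp add: atil_def ctil_def field_simps)
  finally show "X2 y * X2' y = 1 / y" .
  have "X2 y + X2' y = - btil z y / atil z y" unfolding X2_def X2'_def using v(2) by simp
  also have "\<dots> = 1 / (zc * (y + 1))" using V2_props(4,5)[OF assms] z0 nz nz2 by (simp add: atil_def btil_def field_simps)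
  finally show "X2 y + X2' y = 1 / (zc * (y + 1))" .
qed


lemma X2_real:
  assumes "y2 z < r" "r < y3 z"
  shows "cmod (X2 (of_real r)) < cmod (X2' (of_real r))"
proof -
  have rp: "0 < r" using assms y2_pos[OF z0 z1] by simp
  define \<sigma> where "\<sigma> = 2 * z * sqrt r * sqrt (r - y2 z) * sqrt (y3 z - r)"
  have sp: "\<sigma> > 0" unfolding \<sigma>_def using assms rp z0 by simp
  have iS: "\<i> * S2 (of_real r) = - of_real \<sigma>"
  proof -
    have "csqrt (of_real r) = of_real (sqrt r)" using rp by simp
    moreover have "csqrt (of_real r - y2c) = of_real (sqrt (r - y2 z))" using assms
      by (simp flip: of_real_diff)
    moreover have "csqrt (y3c - of_real r) = of_real (sqrt (y3 z - r))" using assms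
      by (simp flip: of_real_diff)
    ultimately show ?thesis unfolding S2_def \<sigma>_def by (simp add: algebra_simps)
  qed
  define D where "D = 2*z*r*(r+1)"
  have Dp: "D > 0" unfolding D_def using z0 rp by simp
  have a: "2 * atil z (complex_of_real r) = of_real D" by (simp add: atil_def D_def)
  have b: "- btil z (complex_of_real r) = of_real r" by (simp add: btil_def)
  have "X2 (of_real r) = of_real ((r - \<sigma>)/D)" unfolding X2_def a b iS by simp
  moreover have "X2' (of_real r) = of_real ((r + \<sigma>)/D)" unfolding X2'_def a b iS by simp
  moreover have "\<bar>(r - \<sigma>)/D\<bar> < \<bar>(r + \<sigma>)/D\<bar>"
  proof -
    have "\<bar>r - \<sigma>\<bar> < \<bar>r + \<sigma>\<bar>" using sp rp by simp
    then show ?thesis using Dp by (simp add: abs_divide divide_strict_right_mono)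
  qed
  ultimately show ?thesis by (simp only: norm_of_real)
qed

lemma conn_pos:
  fixes g :: "complex \<Rightarrow> real"
  assumes "connected S" "continuous_on S g" "\<forall>x\<in>S. g x \<noteq> 0" "a \<in> S" "g a > 0" "x \<in> S"
  shows "g x > 0"
proof (rule ccontr)
  assume "\<not> g x > 0"
  then have "g x < 0" using assms(3,6) by force
  have "connected (g ` S)" by (rule connected_continuous_image[OF assms(2,1)])
  then have "0 \<in> g ` S" unfolding connected_iff_interval
    using assms(4,5,6) \<open>g x < 0\<close> by (meson image_eqI less_imp_le)
  then show False using assms(3) by auto
qed

lemma X2_lt: assumes "y \<in> V2" shows "cmod (X2 y) < cmod (X2' y)"
proof -
  let ?g = "\<lambda>y. cmod (X2' y) - cmod (X2 y)"
  have c: "continuous_on V2 ?g"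
    using holomorphic_on_imp_continuous_on[OF X2_hol] holomorphic_on_imp_continuous_on[OF X2'_hol]
    by (intro continuous_intros) auto
  have nz: "\<forall>y\<in>V2. ?g y \<noteq> 0"
  proof
    fix y assume y: "y \<in> V2"
    show "?g y \<noteq> 0"
    proof (cases "Im y = 0")
      case False
      from no_tie[OF False z0 z1 X2_vieta[OF y]] show ?thesis by simp
    next
      case True
      then have "y = of_real (Re y)" by (simp add: complex_eq_iff)
      moreover have "y2 z < Re y" "Re y < y3 z" using y True by (auto simp: V2_def)
      then have "cmod (X2 (of_real (Re y))) < cmod (X2' (of_real (Re y)))" by (rule X2_real)
      then show ?thesis using \<open>y = of_real (Re y)\<close> by simp
    qed
  qed
  have "?g (complex_of_real ((y2 z + y3 z)/2)) > 0"
    using X2_real[of "(y2 z + y3 z)/2"] y23_lt by simp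
  from conn_pos[OF V2_connected c nz mid_V2 this assms] show ?thesis by simp
qed

lemma X2_small: assumes "y \<in> V2" shows "cmod (X2 y)^2 * cmod y < 1"
proof -
  have "cmod (X2 y) * cmod (X2' y) * cmod y = 1"
    using X2_vieta(1)[OF assms] V2_props(4)[OF assms]
    by (metis divide_self_if norm_divide norm_mult norm_one mult.commute nonzero_mult_div_cancel_left times_divide_eq_right)
  moreover have "cmod (X2 y) * cmod (X2 y) * cmod y < cmod (X2 y) * cmod (X2' y) * cmod y"
  proof -
    have "cmod (X2 y) > 0"
    proof -
      have "X2 y \<noteq> 0" using X2_vieta(1)[OF assms] V2_props(4)[OF assms] by auto
      then show ?thesis by simp
    qed
    then show ?thesis using X2_lt[OF assms] V2_props(4)[OF assms] by simp
  qed
  ultimately show ?thesis by (simp add: power2_eq_square)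
qed

lemma X2_real_val:
  assumes "y2 z < r" "r < y3 z"
  shows "X2 (of_real r) = of_real ((r - 2 * z * sqrt r * sqrt (r - y2 z) * sqrt (y3 z - r)) / (2*z*r*(r+1)))"
proof -
  have rp: "0 < r" using assms y2_pos[OF z0 z1] by simp
  define \<sigma> where "\<sigma> = 2 * z * sqrt r * sqrt (r - y2 z) * sqrt (y3 z - r)"
  have iS: "\<i> * S2 (of_real r) = - of_real \<sigma>"
  proof -
    have "csqrt (of_real r) = of_real (sqrt r)" using rp by simp
    moreover have "csqrt (of_real r - complex_of_real (y2 z)) = of_real (sqrt (r - y2 z))" using assms
      by (simp flip: of_real_diff)
    moreover have "csqrt (complex_of_real (y3 z) - of_real r) = of_real (sqrt (y3 z - r))" using assms
      by (simp flip: of_real_diff)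
    ultimately show ?thesis unfolding S2_def \<sigma>_def by (simp add: algebra_simps)
  qed
  have a: "2 * atil z (complex_of_real r) = of_real (2*z*r*(r+1))" by (simp add: atil_def)
  have b: "- btil z (complex_of_real r) = of_real r" by (simp add: btil_def)
  show ?thesis unfolding X2_def a b iS \<sigma>_def by simp
qed

end


lemma ofreal_Icc: "(complex_of_real ` {a..b}) = {w. Im w = 0 \<and> a \<le> Re w \<and> Re w \<le> b}"
  by (auto simp: complex_eq_iff intro!: image_eqI[where x="Re w" for w])

lemma ofreal_Ici: "(complex_of_real ` {a..}) = {w. Im w = 0 \<and> a \<le> Re w}"
  by (auto simp: complex_eq_iff intro!: image_eqI[where x="Re w" for w])

lemma open_compl_Icc: "open (- (complex_of_real ` {a..b}))"
  unfolding ofreal_Icc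
  by (intro open_Compl closed_Collect_conj closed_Collect_eq closed_Collect_le continuous_intros)

lemma open_compl_Ici: "open (- (complex_of_real ` {a..}))"
  unfolding ofreal_Ici
  by (intro open_Compl closed_Collect_conj closed_Collect_eq closed_Collect_le continuous_intros)

context
  fixes z :: real
  assumes z0: "0 < z" and z1: "z < 1/4"
begin

lemma K_sym: "atil z (y::complex) * x^2 + btil z y * x + ctil z y = ak z x * y^2 + bk z x * y + ck z x"
  by (simp add: atil_def btil_def ctil_def ak_def bk_def ck_def algebra_simps power2_eq_square)

lemma dk_fac: "dk z (x::real) = (z*(x - x1 z)*(x - x4 z)) * (z*(x - x2 z)*(x - x3 z))"
  unfolding x14_poly[OF z0 z1] x23_poly[OF z0 z1]
  by (simp add: dk_def ak_def bk_def ck_def algebra_simps power2_eq_square)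

lemma dk_nonpos_34: assumes "x3 z \<le> x" "x \<le> x4 z" shows "dk z x \<le> 0"
proof -
  have "x1 z \<le> x" using assms x1_lt1[OF z0 z1] x3_gt1[OF z0 z1] by simp
  then have "z*(x - x1 z)*(x - x4 z) \<le> 0" using assms z0 by (simp add: mult_nonneg_nonpos)
  moreover have "z*(x - x2 z)*(x - x3 z) \<ge> 0" using assms z0 x2_le_x3[OF z0 z1] by simp
  ultimately show ?thesis unfolding dk_fac by (simp add: mult_nonpos_nonneg)
qed

lemma X2_avoid: assumes "y \<in> V2 z" shows "X2 z y \<notin> complex_of_real ` {x3 z..x4 z}"
proof
  assume "X2 z y \<in> complex_of_real ` {x3 z..x4 z}"
  then obtain x where x: "X2 z y = of_real x" "x3 z \<le> x" "x \<le> x4 z" by auto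
  have xp: "x > 1" using x x3_gt1[OF z0 z1] by simp
  have "ak z (of_real x) * y^2 + bk z (of_real x) * y + ck z (of_real x) = 0"
    using X2_root[OF z0 z1 assms] K_sym x(1) by simp
  then have "of_real (z*x^2) * y^2 + of_real (z*x^2 - x + z) * y + of_real z = 0"
    by (simp add: ak_def bk_def ck_def)
  moreover have "(z*x^2 - x + z)^2 - 4*(z*x^2)*z \<le> 0"
    using dk_nonpos_34[OF x(2,3)] by (simp add: dk_def ak_def bk_def ck_def)
  moreover have "z*x^2 > 0" using z0 xp by simp
  ultimately have "(cmod y)^2 = z / (z*x^2)" using real_disc_mod by blast
  then have "(cmod y)^2 = (1/x)^2" using z0 by (simp add: power_divide)
  then have cy: "cmod y = 1/x" using xp by (simp add: power2_eq_iff_nonneg)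
  have "cmod (X2 z y)^2 * cmod y < 1" by (rule X2_small[OF z0 z1 assms])
  then have "x^2 * (1/x) < 1" using x(1) xp cy by simp
  then have "x < 1" using xp by (simp add: power2_eq_square)
  then show False using xp by simp
qed


lemma witness: "\<exists>r. y2 z < r \<and> r < 1 \<and> cmod (X2 z (of_real r)) < 1"
proof -
  define r where "r = (1 + max (y2 z) (x2 z))/2"
  have r1: "y2 z < r" "x2 z < r" "r < 1"
    using y2_lt1[OF z0 z1] x2_lt1[OF z0 z1] by (auto simp: r_def)
  have r3: "r < y3 z" "r < x3 z" using r1 y3_gt1[OF z0 z1] x3_gt1[OF z0 z1] by auto
  have rp: "0 < r" using r1 y2_pos[OF z0 z1] by simp
  define \<sigma> where "\<sigma> = 2 * z * sqrt r * sqrt (r - y2 z) * sqrt (y3 z - r)"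
  define D where "D = 2*z*r*(r+1)"
  have Dp: "D > 0" unfolding D_def using z0 rp by simp
  have sp: "\<sigma> > 0" unfolding \<sigma>_def using r1 r3 rp z0 by simp
  have "\<sigma>^2 = 4*z^2 * r * (r - y2 z) * (y3 z - r)" unfolding \<sigma>_def using r1 r3 rp
    by (simp add: power_mult_distrib)
  also have "\<dots> = - r * (4*z^2*(r - y2 z)*(r - y3 z))" by (simp add: algebra_simps)
  also have "\<dots> = r^2 - 4*z^2*r*(r+1)^2" unfolding y_poly[OF z0 z1] by (simp add: algebra_simps power2_eq_square)
  finally have s2: "\<sigma>^2 = r^2 - 4*z^2*r*(r+1)^2" .
  have "\<sigma>^2 < r^2" unfolding s2 using z0 rp by simp
  then have "\<sigma> < r" using rp by (simp add: power2_less_imp_less)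
  have "r - \<sigma> < D"
  proof (cases "r - D \<le> 0")
    case True then show ?thesis using sp by simp
  next
    case False
    have "(r - D)^2 - \<sigma>^2 = 4*z*r*(r+1)*(z*(r+1)^2 - r)"
      unfolding s2 D_def by (simp add: algebra_simps power2_eq_square)
    also have "z*(r+1)^2 - r = z*(r - x2 z)*(r - x3 z)" unfolding x23_poly[OF z0 z1]
      by (simp add: algebra_simps power2_eq_square)
    also have "4*z*r*(r+1)*(z*(r - x2 z)*(r - x3 z)) < 0"
      using z0 rp r1 r3 by (simp add: mult_pos_neg)
    finally have "(r - D)^2 < \<sigma>^2" by simp
    then have "r - D < \<sigma>" using sp by (simp add: power2_less_imp_less)
    then show ?thesis by simp
  qed
  then have "\<bar>(r - \<sigma>)/D\<bar> < 1" using \<open>\<sigma> < r\<close> Dp by (simp add: abs_divide)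
  moreover have "X2 z (of_real r) = of_real ((r - \<sigma>)/D)"
    unfolding \<sigma>_def D_def by (rule X2_real_val[OF z0 z1 r1(1) r3(1)])
  ultimately have "cmod (X2 z (of_real r)) < 1" by (simp only: norm_of_real)
  then show ?thesis using r1 by (intro exI[of _ r]) simp
qed

end


context
  fixes z :: real and F G :: "complex \<Rightarrow> complex"
  assumes z0: "0 < z" and z1: "z < 1/4"
    and F_hol: "F holomorphic_on (- (complex_of_real ` {x3 z..x4 z}))"
    and F_ext: "\<And>x. cmod x < 1 \<Longrightarrow> F x = complex_of_real z * Qgf x 0 z"
    and G_hol: "G holomorphic_on (- (complex_of_real ` {y3 z..}))"
    and G_ext: "\<And>y. cmod y < 1 \<Longrightarrow> G y = complex_of_real z * (y + 1) * Qgf 0 y z"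
begin

lemma rel_small:
  assumes "cmod x < 1" "cmod y < 1" "atil z y * x^2 + btil z y * x + ctil z y = 0"
  shows "F x + G y - F 0 = x * y"
proof -
  let ?zc = "complex_of_real z"
  let ?S = "y + x^2*y^2 + x^2*y + 1"
  have K: "?zc * ?S = x * y" using assms(3) by (simp add: atil_def btil_def ctil_def algebra_simps power2_eq_square)
  have fe: "x * y * Qgf x y z = x * y + ?zc * (?S * Qgf x y z
        - y * Qgf 0 y z - (Qgf x 0 z + Qgf 0 y z - Qgf 0 0 z))"
    using funeq[of x y z] assms(1,2) z0 z1 by simp
  have "?zc * (?S * Qgf x y z) = x * y * Qgf x y z" using K by (simp add: mult.assoc[symmetric])
  then have "0 = x * y - ?zc * (y * Qgf 0 y z + (Qgf x 0 z + Qgf 0 y z - Qgf 0 0 z))"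
    using fe by (simp add: algebra_simps)
  moreover have "F x = ?zc * Qgf x 0 z" "G y = ?zc * (y + 1) * Qgf 0 y z" "F 0 = ?zc * Qgf 0 0 z"
    using F_ext G_ext assms(1,2) by auto
  ultimately show ?thesis by (simp add: algebra_simps)
qed

lemma G_hol_V2: "G holomorphic_on V2 z"
  by (rule holomorphic_on_subset[OF G_hol]) (use V2_props(7)[OF z0 z1] in \<open>auto simp: ofreal_Ici\<close>)

lemma rel_V2:
  assumes "y \<in> V2 z"
  shows "F (X2 z y) + G y - X2 z y * y = F 0"
proof -
  define s0 where "s0 = (V2 z \<inter> X2 z -` ball 0 1) \<inter> ball 0 1"
  have "open (V2 z \<inter> X2 z -` ball 0 1)"
    by (rule continuous_open_preimage[OF holomorphic_on_imp_continuous_on[OF X2_hol[OF z0 z1]]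
        V2_open[OF z0 z1] open_ball])
  then have "open s0" unfolding s0_def by (rule open_Int[OF _ open_ball])
  moreover obtain r where r: "y2 z < r" "r < 1" "cmod (X2 z (of_real r)) < 1" using witness[OF z0 z1] by blast
  have "of_real r \<in> s0" using r y3_gt1[OF z0 z1] y2_pos[OF z0 z1] by (auto simp: s0_def V2_def[OF z0 z1])
  then have "s0 \<noteq> {}" by auto
  moreover have "s0 \<subseteq> V2 z" by (auto simp: s0_def)
  moreover have "(\<lambda>y. (F \<circ> X2 z) y + G y - X2 z y * y) holomorphic_on V2 z"
  proof -
    have "(F \<circ> X2 z) holomorphic_on V2 z"
      by (rule holomorphic_on_compose_gen[OF X2_hol[OF z0 z1] F_hol]) (use X2_avoid[OF z0 z1] in auto)
    then have h1: "(\<lambda>w. F (X2 z w)) holomorphic_on V2 z" by (simp add: o_def)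
    show ?thesis unfolding o_def using h1 X2_hol[OF z0 z1] G_hol_V2 by (intro holomorphic_intros) auto
  qed
  moreover have "(\<lambda>y. F 0) holomorphic_on V2 z" by (intro holomorphic_intros)
  moreover have "(F \<circ> X2 z) w + G w - X2 z w * w = F 0" if "w \<in> s0" for w
  proof -
    have "w \<in> V2 z" "cmod (X2 z w) < 1" "cmod w < 1" using that by (auto simp: s0_def)
    from rel_small[OF this(2,3) X2_root[OF z0 z1 this(1)]] show ?thesis by (simp add: algebra_simps)
  qed
  ultimately have "(F \<circ> X2 z) y + G y - X2 z y * y = F 0"
    using analytic_continuation_open[of s0 "V2 z" "\<lambda>y. (F \<circ> X2 z) y + G y - X2 z y * y" "\<lambda>y. F 0" y]
      V2_open[OF z0 z1] V2_connected[OF z0 z1] assms by blast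
  then show ?thesis by simp
qed

end


lemma lim_const_eq:
  fixes h :: "complex \<Rightarrow> complex"
  assumes "isCont h p" "q \<longlonglongrightarrow> p" "\<And>n. h (q n) = c"
  shows "h p = c"
proof -
  have "(\<lambda>n. h (q n)) \<longlonglongrightarrow> h p" by (rule isCont_tendsto_compose[OF assms(1,2)])
  then have "(\<lambda>n. c) \<longlonglongrightarrow> h p" using assms(3) by simp
  then show ?thesis using LIMSEQ_unique tendsto_const by blast
qed

lemma hol_isCont: "f holomorphic_on S \<Longrightarrow> open S \<Longrightarrow> x \<in> S \<Longrightarrow> isCont f x"
  using holomorphic_on_imp_continuous_on continuous_on_eq_continuous_at by blast

context
  fixes z :: real
  assumes z0: "0 < z" and z1: "z < 1/4"
begin

lemma dtil_fac_real: "dtil z (p::real) = - 4 * z^2 * p * (p - y2 z) * (p - y3 z)"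
proof -
  have "- 4 * z^2 * p * (p - y2 z) * (p - y3 z) = - p * (4*z^2*(p - y2 z)*(p - y3 z))" by (simp add: algebra_simps)
  also have "\<dots> = dtil z p" unfolding y_poly[OF z0 z1]
    by (simp add: dtil_def atil_def btil_def ctil_def algebra_simps power2_eq_square)
  finally show ?thesis by simp
qed

definition Se :: "complex \<Rightarrow> complex \<Rightarrow> complex" where
  "Se e y = 2 * \<i> * complex_of_real z * csqrt y * (e * csqrt (complex_of_real (y2 z) - y)) * csqrt (complex_of_real (y3 z) - y)"

definition Xe :: "complex \<Rightarrow> complex \<Rightarrow> complex" where
  "Xe e y = (- btil z y + \<i> * Se e y) / (2 * atil z y)"

lemma S2_up: "Im y > 0 \<Longrightarrow> S2 z y = Se \<i> y"
proof -
  assume "Im y > 0"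
  then have "csqrt (- (complex_of_real (y2 z) - y)) = \<i> * csqrt (complex_of_real (y2 z) - y)"
    by (intro csqrt_minus) simp
  then show ?thesis by (simp add: S2_def[OF z0 z1] Se_def)
qed

lemma S2_dn: "Im y < 0 \<Longrightarrow> S2 z y = Se (-\<i>) y"
proof -
  assume "Im y < 0"
  then have "csqrt (- (y - complex_of_real (y2 z))) = \<i> * csqrt (y - complex_of_real (y2 z))"
    by (intro csqrt_minus) simp
  then have "csqrt (y - complex_of_real (y2 z)) = - \<i> * csqrt (complex_of_real (y2 z) - y)"
    by (simp add: algebra_simps)
  then show ?thesis by (simp add: S2_def[OF z0 z1] Se_def)
qed

lemma X2_up: "Im y > 0 \<Longrightarrow> X2 z y = Xe \<i> y"
  using S2_up by (simp add: X2_def[OF z0 z1] Xe_def)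

lemma X2_dn: "Im y < 0 \<Longrightarrow> X2 z y = Xe (-\<i>) y"
  using S2_dn by (simp add: X2_def[OF z0 z1] Xe_def)

definition "W0 = {w. 0 < Re w \<and> Re w < y2 z}"

lemma W0_open: "open W0"
  unfolding W0_def by (intro open_Collect_conj open_Collect_less continuous_intros)

lemma Xe_hol: "Xe e holomorphic_on W0"
proof -
  have "w \<notin> \<real>\<^sub>\<le>\<^sub>0" "complex_of_real (y2 z) - w \<notin> \<real>\<^sub>\<le>\<^sub>0" "complex_of_real (y3 z) - w \<notin> \<real>\<^sub>\<le>\<^sub>0"
    "atil z w \<noteq> 0" if "w \<in> W0" for w
  proof -
    have r: "0 < Re w" "Re w < y2 z" using that by (auto simp: W0_def)
    then show "w \<notin> \<real>\<^sub>\<le>\<^sub>0" "complex_of_real (y2 z) - w \<notin> \<real>\<^sub>\<le>\<^sub>0" "complex_of_real (y3 z) - w \<notin> \<real>\<^sub>\<le>\<^sub>0"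
      using y23_lt[OF z0 z1] by (auto simp: complex_nonpos_Reals_iff)
    have "Re (w + 1) > 0" using r by simp
    then have "w + 1 \<noteq> 0" by (metis zero_complex.sel(1) less_irrefl)
    moreover have "w \<noteq> 0" using r by auto
    ultimately have "w \<noteq> 0" "w + 1 \<noteq> 0" by auto
    then show "atil z w \<noteq> 0" using z0 by (simp add: atil_def)
  qed
  moreover have "atil z holomorphic_on W0" unfolding atil_def by (intro holomorphic_intros)
  ultimately show ?thesis unfolding Xe_def Se_def btil_def
    by (intro holomorphic_intros) auto
qed

lemma sqrt_dtil: assumes "0 < p" "p < y2 z"
  shows "sqrt (- dtil z p) = 2 * z * sqrt p * sqrt (y2 z - p) * sqrt (y3 z - p)"
proof -
  have "- dtil z p = (2*z)^2 * p * (y2 z - p) * (y3 z - p)"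
    unfolding dtil_fac_real by (simp add: algebra_simps power2_eq_square)
  then show ?thesis using assms y23_lt[OF z0 z1] z0 by (simp add: real_sqrt_mult)
qed

lemma Xe_val:
  assumes "0 < p" "p < y2 z"
  shows "Xe \<i> (of_real p) = X0pm 1 z p" "Xe (-\<i>) (of_real p) = X0pm (-1) z p"
proof -
  define \<tau> where "\<tau> = 2 * z * sqrt p * sqrt (y2 z - p) * sqrt (y3 z - p)"
  have c1: "csqrt (of_real p) = of_real (sqrt p)" using assms by simp
  have c2: "csqrt (complex_of_real (y2 z) - of_real p) = of_real (sqrt (y2 z - p))" using assms
    by (simp flip: of_real_diff)
  have c3: "csqrt (complex_of_real (y3 z) - of_real p) = of_real (sqrt (y3 z - p))" using assms y23_lt[OF z0 z1]
    by (simp flip: of_real_diff)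
  have a: "complex_of_real (2 * atil z p) = 2 * atil z (complex_of_real p)" by (simp add: atil_def)
  have b: "complex_of_real (- btil z p) = - btil z (complex_of_real p)" by (simp add: btil_def)
  have "\<i> * Se \<i> (of_real p) = - \<i> * of_real \<tau>" unfolding Se_def c1 c2 c3 \<tau>_def by (simp add: algebra_simps)
  then show "Xe \<i> (of_real p) = X0pm 1 z p"
    unfolding Xe_def X0pm_def sqrt_dtil[OF assms] \<tau>_def[symmetric] a b by simp
  have "\<i> * Se (-\<i>) (of_real p) = \<i> * of_real \<tau>" unfolding Se_def c1 c2 c3 \<tau>_def by (simp add: algebra_simps)
  then show "Xe (-\<i>) (of_real p) = X0pm (-1) z p"
    unfolding Xe_def X0pm_def sqrt_dtil[OF assms] \<tau>_def[symmetric] a b by simp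
qed

lemma X0pm_Im:
  assumes "0 < p" "p < y2 z" "s \<noteq> 0"
  shows "Im (X0pm s z p) \<noteq> 0"
proof -
  have "- dtil z p = 4 * z^2 * p * (y2 z - p) * (y3 z - p)" unfolding dtil_fac_real by (simp add: algebra_simps)
  moreover have "4 * z^2 * p * (y2 z - p) * (y3 z - p) > 0" using assms z0 y23_lt[OF z0 z1] by simp
  ultimately have "- dtil z p > 0" by simp
  moreover have "atil z p > 0" using assms z0 by (simp add: atil_def)
  ultimately show ?thesis using assms(3) unfolding X0pm_def
    by (simp add: Im_divide_of_real)
qed

end


context
  fixes z :: real
  assumes z0: "0 < z" and z1: "z < 1/4"
begin

lemma dtil_nonpos: "0 < y \<Longrightarrow> y \<le> y2 z \<Longrightarrow> dtil z y \<le> 0"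
  unfolding dtil_fac_real[OF z0 z1] using y23_lt[OF z0 z1] z0
  by (simp add: mult_nonneg_nonpos zero_le_mult_iff mult_le_0_iff)

lemma dk_nonpos_12: assumes "x1 z \<le> x" "x \<le> x2 z" shows "dk z x \<le> 0"
proof -
  have "x \<le> x4 z" using assms x2_le_x3[OF z0 z1] x3_le_x4[OF z0 z1] by simp
  then have "z*(x - x1 z)*(x - x4 z) \<le> 0" using assms z0 by (simp add: mult_nonneg_nonpos)
  moreover have "(x - x2 z)*(x - x3 z) \<ge> 0" using assms x2_le_x3[OF z0 z1]
    by (simp add: mult_nonpos_nonpos)
  then have "z*(x - x2 z)*(x - x3 z) \<ge> 0" using z0 by (simp add: mult.assoc)
  ultimately show ?thesis unfolding dk_fac[OF z0 z1] by (simp add: mult_nonpos_nonneg)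
qed

lemma X0pm_root:
  assumes "0 < y" "y \<le> y2 z" "s^2 = 1"
  shows "atil z (complex_of_real y) * (X0pm s z y)^2 + btil z (complex_of_real y) * X0pm s z y + ctil z (complex_of_real y) = 0"
proof -
  let ?a = "atil z (complex_of_real y)" and ?b = "btil z (complex_of_real y)" and ?c = "ctil z (complex_of_real y)"
  define d where "d = - complex_of_real s * \<i> * complex_of_real (sqrt (- dtil z y))"
  have "complex_of_real y + 1 = complex_of_real (y + 1)" by simp
  then have "complex_of_real y + 1 \<noteq> 0" using assms(1) by (simp only: of_real_eq_0_iff)
  then have a0: "?a \<noteq> 0" using assms z0 by (simp add: atil_def)
  have "d^2 = complex_of_real s ^2 * (- ((complex_of_real (sqrt (- dtil z y)))^2))"
    by (simp add: d_def power_mult_distrib)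
  also have "(complex_of_real (sqrt (- dtil z y)))^2 = complex_of_real (- dtil z y)"
    using dtil_nonpos[OF assms(1,2)] by (simp flip: of_real_power)
  also have "complex_of_real s ^2 = 1" using assms(3) by (metis of_real_1 of_real_power)
  finally have d2: "d^2 = ?b^2 - 4 * ?a * ?c" by (simp add: dtil_def atil_def btil_def ctil_def)
  have "X0pm s z y = (- ?b + d) / (2 * ?a)"
    by (simp add: X0pm_def d_def atil_def btil_def)
  then show ?thesis using quad_root[OF a0 d2] by simp
qed

lemma X0pm_mod:
  assumes "0 < y" "y \<le> y2 z" "s^2 = 1"
  shows "(cmod (X0pm s z y))^2 = 1 / y"
proof -
  have e: "of_real (atil z y) * (X0pm s z y)^2 + of_real (btil z y) * X0pm s z y + of_real (ctil z y) = 0"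
    using X0pm_root[OF assms] by (simp add: atil_def btil_def ctil_def)
  have p: "atil z y > 0" using assms z0 by (simp add: atil_def)
  have d: "(btil z y)^2 - 4 * atil z y * ctil z y \<le> 0" using dtil_nonpos[OF assms(1,2)] by (simp add: dtil_def)
  have "(cmod (X0pm s z y))^2 = ctil z y / atil z y" by (rule real_disc_mod[OF p d e])
  then have "(cmod (X0pm s z y))^2 = ctil z y / atil z y" .
  then show ?thesis using assms z0 by (simp add: atil_def ctil_def)
qed

lemma Y0pm_root:
  assumes "x1 z \<le> x" "x \<le> x2 z" "s^2 = 1"
  shows "ak z (complex_of_real x) * (Y0pm s z x)^2 + bk z (complex_of_real x) * Y0pm s z x + ck z (complex_of_real x) = 0"
proof -
  let ?a = "ak z (complex_of_real x)" and ?b = "bk z (complex_of_real x)" and ?c = "ck z (complex_of_real x)"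
  define d where "d = - complex_of_real s * \<i> * complex_of_real (sqrt (- dk z x))"
  have xp: "x > 0" using assms x1_pos[OF z0 z1] by simp
  have a0: "?a \<noteq> 0" using xp z0 by (simp add: ak_def)
  define D where "D = sqrt (- dk z x)"
  have "d^2 = complex_of_real s ^2 * (- ((complex_of_real D)^2))"
    by (simp add: d_def D_def power_mult_distrib)
  also have "(complex_of_real D)^2 = complex_of_real (- dk z x)"
    using dk_nonpos_12[OF assms(1,2)] unfolding D_def by (simp flip: of_real_power)
  also have "complex_of_real s ^2 = 1" using assms(3) by (metis of_real_1 of_real_power)
  finally have d2: "d^2 = ?b^2 - 4 * ?a * ?c" by (simp add: dk_def ak_def bk_def ck_def)
  have "Y0pm s z x = (- ?b + d) / (2 * ?a)"
    by (simp add: Y0pm_def d_def ak_def bk_def)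
  then show ?thesis using quad_root[OF a0 d2] by simp
qed

lemma Y0pm_mod:
  assumes "x1 z \<le> x" "x \<le> x2 z" "s^2 = 1"
  shows "cmod (Y0pm s z x) = 1 / x"
proof -
  have xp: "x > 0" using assms x1_pos[OF z0 z1] by simp
  have e: "of_real (ak z x) * (Y0pm s z x)^2 + of_real (bk z x) * Y0pm s z x + of_real (ck z x) = 0"
    using Y0pm_root[OF assms] by (simp add: ak_def bk_def ck_def)
  have p: "ak z x > 0" using xp z0 by (simp add: ak_def)
  have d: "(bk z x)^2 - 4 * ak z x * ck z x \<le> 0" using dk_nonpos_12[OF assms(1,2)] by (simp add: dk_def)
  have "(cmod (Y0pm s z x))^2 = ck z x / ak z x" by (rule real_disc_mod[OF p d e])
  then have "(cmod (Y0pm s z x))^2 = (1/x)^2" using xp z0 by (simp add: ak_def ck_def power_divide)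
  then show ?thesis using xp by (simp add: power2_eq_iff_nonneg)
qed

lemma cnj_X0pm: "cnj (X0pm s z y) = X0pm (-s) z y"
  by (simp add: X0pm_def)

lemma cnj_Y0pm: "cnj (Y0pm s z x) = Y0pm (-s) z x"
  by (simp add: Y0pm_def)

lemma Y0_at_X0pm:
  assumes "0 < y" "y < y2 z" "s^2 = 1"
  shows "Y0 z (X0pm s z y) = complex_of_real y"
proof -
  let ?t = "X0pm s z y"
  have m: "(cmod ?t)^2 = 1/y" using X0pm_mod[OF assms(1) _ assms(3)] assms(2) by simp
  have t0: "?t \<noteq> 0" using m assms(1) by auto
  have a0: "ak z ?t \<noteq> 0" using t0 z0 by (simp add: ak_def)
  have root: "ak z ?t * (of_real y)^2 + bk z ?t * of_real y + ck z ?t = 0"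
    using X0pm_root[OF assms(1) _ assms(3)] assms(2) K_sym[OF z0 z1, of "of_real y" ?t] by simp
  have "cmod (ck z ?t / (ak z ?t * of_real y)) = 1 / ((cmod ?t)^2 * y)"
    using assms(1) t0 z0 by (simp add: ak_def ck_def norm_divide norm_mult norm_power)
  also have "\<dots> = 1" using m assms(1) by simp
  finally have "cmod (complex_of_real y) < cmod (ck z ?t / (ak z ?t * of_real y))"
    using assms y2_lt1[OF z0 z1] by simp
  from select_root[OF a0 root _ this] assms(1)
  show ?thesis unfolding Y0_def dk_def by simp
qed

lemma X0_at_Y0pm:
  assumes "x1 z \<le> x" "x \<le> x2 z" "s^2 = 1"
  shows "X0 z (Y0pm s z x) = complex_of_real x"
proof -
  let ?t = "Y0pm s z x"
  have xp: "x > 0" using assms x1_pos[OF z0 z1] by simp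
  have x1: "x < 1" using assms x2_lt1[OF z0 z1] by simp
  have m: "cmod ?t = 1/x" using Y0pm_mod[OF assms] .
  have t0: "?t \<noteq> 0" using m xp by auto
  have tt: "?t + 1 \<noteq> 0"
  proof
    assume "?t + 1 = 0"
    then have "?t = -1" by (simp add: add_eq_0_iff2)
    then have "1/x = 1" using m by simp
    then show False using x1 xp by simp
  qed
  have a0: "atil z ?t \<noteq> 0" using t0 tt z0 by (simp add: atil_def)
  have root: "atil z ?t * (of_real x)^2 + btil z ?t * of_real x + ctil z ?t = 0"
    using Y0pm_root[OF assms] K_sym[OF z0 z1, of ?t "of_real x"] by simp
  have "cmod (ctil z ?t / (atil z ?t * of_real x)) = 1 / (cmod ?t * x)"
    using xp t0 tt z0 by (simp add: atil_def ctil_def norm_divide norm_mult)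
  also have "\<dots> = 1" using m xp by simp
  finally have "cmod (complex_of_real x) < cmod (ctil z ?t / (atil z ?t * of_real x))"
    using xp x1 by simp
  from select_root[OF a0 root _ this] xp
  show ?thesis unfolding X0_def dtil_def by simp
qed

end


lemma X2_vieta2:
  assumes z0: "0 < z" and z1: "z < 1/4" and y: "y \<in> V2 z"
  shows "X2 z y * X2' z y = ctil z y / atil z y" "X2 z y + X2' z y = - btil z y / atil z y"
proof -
  have a: "atil z y \<noteq> 0" using V2_props(6)[OF z0 z1 y] .
  have d: "(\<i> * S2 z y)^2 = btil z y ^2 - 4 * atil z y * ctil z y" using S2sq[OF z0 z1] by (simp add: dtil_def)
  note v = vieta[OF a d]
  show "X2 z y * X2' z y = ctil z y / atil z y" unfolding X2_def[OF z0 z1] X2'_def[OF z0 z1] using v(1) by simp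
  show "X2 z y + X2' z y = - btil z y / atil z y" unfolding X2_def[OF z0 z1] X2'_def[OF z0 z1] using v(2) by simp
qed

context
  fixes z :: real and F G :: "complex \<Rightarrow> complex"
  assumes z0: "0 < z" and z1: "z < 1/4"
    and F_hol: "F holomorphic_on (- (complex_of_real ` {x3 z..x4 z}))"
    and F_ext: "\<And>x. cmod x < 1 \<Longrightarrow> F x = complex_of_real z * Qgf x 0 z"
    and G_hol: "G holomorphic_on (- (complex_of_real ` {y3 z..}))"
    and G_ext: "\<And>y. cmod y < 1 \<Longrightarrow> G y = complex_of_real z * (y + 1) * Qgf 0 y z"
begin

lemma rel_Y:
  assumes "x1 z \<le> x" "x \<le> x2 z" "s^2 = 1" "Im (Y0pm s z x) \<noteq> 0"
  shows "F (of_real x) + G (Y0pm s z x) - of_real x * Y0pm s z x = F 0"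
proof -
  let ?t = "Y0pm s z x"
  have xp: "x > 0" using assms x1_pos[OF z0 z1] by simp
  have x1: "x < 1" using assms x2_lt1[OF z0 z1] by simp
  have tV: "?t \<in> V2 z" using assms(4) by (simp add: V2_def[OF z0 z1])
  have m: "cmod ?t = 1/x" using Y0pm_mod[OF z0 z1 assms(1-3)] .
  have a0: "atil z ?t \<noteq> 0" using V2_props(6)[OF z0 z1 tV] .
  have root: "atil z ?t * (of_real x)^2 + btil z ?t * of_real x + ctil z ?t = 0"
    using Y0pm_root[OF z0 z1 assms(1-3)] K_sym[OF z0 z1, of ?t "of_real x"] by simp
  have "of_real x = X2 z ?t \<or> of_real x = X2' z ?t"
    by (rule two_roots[OF a0 X2_vieta2[OF z0 z1 tV] root])
  moreover have "of_real x \<noteq> X2' z ?t"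
  proof
    assume e: "of_real x = X2' z ?t"
    have "cmod (X2 z ?t) * x = cmod (X2 z ?t * X2' z ?t)" using e[symmetric] xp by (simp add: norm_mult)
    also have "\<dots> = 1 / cmod ?t" using X2_vieta(1)[OF z0 z1 tV] by (simp add: norm_divide)
    also have "\<dots> = x" using m by simp
    finally have "cmod (X2 z ?t) = 1" using xp by simp
    moreover have "cmod (X2 z ?t) < cmod (X2' z ?t)" by (rule X2_lt[OF z0 z1 tV])
    ultimately show False using e[symmetric] x1 xp by simp
  qed
  ultimately have "X2 z ?t = of_real x" by simp
  then show ?thesis using rel_V2[OF z0 z1 F_hol F_ext G_hol G_ext tV] by (simp add: mult.commute)
qed

lemma rel_X:
  assumes p: "0 < p" "p < y2 z" and s: "s = 1 \<or> s = -1"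
  shows "F (X0pm s z p) + G (of_real p) - X0pm s z p * of_real p = F 0"
proof -
  define e where "e = (if s = 1 then \<i> else - \<i>)"
  define q where "q = (\<lambda>n. complex_of_real p + \<i> * of_real (s * inverse (real (Suc n))))"
  have pW: "complex_of_real p \<in> W0 z" using p by (simp add: W0_def[OF z0 z1])
  have Xv: "Xe z e (of_real p) = X0pm s z p"
  proof (cases "s = 1")
    case True then show ?thesis using Xe_val(1)[OF z0 z1 p] by (simp add: e_def)
  next
    case False then have "s = -1" using s by simp
    then show ?thesis using Xe_val(2)[OF z0 z1 p] by (simp add: e_def)
  qed
  have "s \<noteq> 0" using s by auto
  then have "Im (X0pm s z p) \<noteq> 0" by (rule X0pm_Im[OF z0 z1 p])
  then have Fc: "isCont F (Xe z e (of_real p))" unfolding Xv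
    by (intro hol_isCont[OF F_hol open_compl_Icc]) (auto simp: ofreal_Icc)
  have Gc: "isCont G (of_real p)"
    by (intro hol_isCont[OF G_hol open_compl_Ici]) (use p y23_lt[OF z0 z1] in \<open>auto simp: ofreal_Ici\<close>)
  have Xc: "isCont (Xe z e) (of_real p)" by (rule hol_isCont[OF Xe_hol[OF z0 z1] W0_open[OF z0 z1] pW])
  have c1: "isCont (\<lambda>y. F (Xe z e y)) (of_real p)" by (rule isCont_o2[OF Xc Fc])
  have c2: "isCont (\<lambda>y. Xe z e y * y) (of_real p)" by (rule isCont_mult[OF Xc continuous_ident])
  have hc: "isCont (\<lambda>y. F (Xe z e y) + G y - Xe z e y * y) (of_real p)"
    by (rule isCont_diff[OF isCont_add[OF c1 Gc] c2])
  have "(\<lambda>n. s * inverse (real (Suc n))) \<longlonglongrightarrow> s * 0"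
    by (rule tendsto_mult[OF tendsto_const LIMSEQ_inverse_real_of_nat])
  from tendsto_add[OF tendsto_const tendsto_mult[OF tendsto_const tendsto_of_real[OF this]], of "complex_of_real p" \<i>]
  have "q \<longlonglongrightarrow> complex_of_real p + \<i> * of_real (s * 0)" unfolding q_def .
  then have ql: "q \<longlonglongrightarrow> complex_of_real p" by simp
  have "F (Xe z e (q n)) + G (q n) - Xe z e (q n) * q n = F 0" for n
  proof -
    have imq: "Im (q n) = s * inverse (real (Suc n))"
      by (simp only: q_def plus_complex.sel Im_i_times Re_complex_of_real Im_complex_of_real add_0_left)
    have ip: "inverse (real (Suc n)) > 0" by simp
    have "X2 z (q n) = Xe z e (q n) \<and> Im (q n) \<noteq> 0"
    proof (cases "s = 1")
      case True
      then have "Im (q n) > 0" using imq ip by simp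
      then show ?thesis using X2_up[OF z0 z1, of "q n"] True by (simp add: e_def)
    next
      case False
      then have "s = -1" using s by simp
      then have "Im (q n) < 0" using imq ip by simp
      then show ?thesis using X2_dn[OF z0 z1, of "q n"] \<open>s = -1\<close> by (simp add: e_def)
    qed
    then have "X2 z (q n) = Xe z e (q n)" and qV: "q n \<in> V2 z" by (auto simp: V2_def[OF z0 z1])
    then show ?thesis using rel_V2[OF z0 z1 F_hol F_ext G_hol G_ext qV] by simp
  qed
  from lim_const_eq[OF hc ql this] show ?thesis unfolding Xv by (simp add: mult.commute)
qed

end


lemma comp_sub:
  fixes A B C :: "complex set"
  assumes "open A" "open B" "A \<inter> B = {}" "- C \<subseteq> A \<union> B" "x \<in> A"
  shows "connected_component_set (- C) x \<subseteq> A"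
proof (cases "x \<in> - C")
  case False
  then have "connected_component_set (- C) x = {}" using connected_component_eq_empty by blast
  then show ?thesis by (simp only: empty_subsetI)
next
  case True
  let ?K = "connected_component_set (- C) x"
  have xK: "x \<in> ?K" using True by simp
  have "?K \<subseteq> - C" by (rule connected_component_subset)
  then have "A \<inter> ?K = {} \<or> B \<inter> ?K = {}"
    using connectedD[OF connected_connected_component assms(1,2)] assms(3,4) by blast
  then have "B \<inter> ?K = {}" using xK assms(5) by blast
  then show ?thesis using \<open>?K \<subseteq> - C\<close> assms(4) by blast
qed

context
  fixes z :: real
  assumes z0: "0 < z" and z1: "z < 1/4"
begin

lemma x1_le_x2: "x1 z \<le> x2 z"
proof -
  have b2: "(sB z)^2 = 1 - 4*z" using sB(1)[OF z0 z1] .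
  have c2: "(sC z)^2 = 1 + 4*z" using sC(1)[OF z0 z1] .
  have e1: "(1 - 2*z)^2 = (1 - 4*z) + 4*z^2" by (simp add: power2_eq_square algebra_simps)
  have "(sB z)^2 \<le> (1 - 2*z)^2" unfolding b2 e1 by simp
  moreover have "0 \<le> 1 - 2*z" using z1 by simp
  ultimately have sb: "sB z \<le> 1 - 2*z" by (rule power2_le_imp_le)
  have "8*z*(2*z + sB z) \<le> 8*z*1" using z0 sb by (intro mult_left_mono) auto
  moreover have "(4*z + sB z)^2 = (sB z)^2 + 8*z*(2*z + sB z)"
    by (simp add: power2_eq_square algebra_simps)
  ultimately have "(4*z + sB z)^2 \<le> (sC z)^2" unfolding b2 c2 by simp
  moreover have "0 \<le> sC z" using sC(2)[OF z0 z1] by simp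
  ultimately have "4*z + sB z \<le> sC z" by (rule power2_le_imp_le)
  then have "1 + 2*z - sC z \<le> 1 - 2*z - sB z" by simp
  then show ?thesis unfolding x_eqs[OF z0 z1] using z0 by (intro divide_right_mono) auto
qed

definition pX :: "complex \<Rightarrow> real" where
  "pX w = 2*z*Re w*((Re w)^2 + (Im w)^2 + 1) - ((Re w)^2 + (Im w)^2)"

lemma pX_cont: "continuous_on UNIV pX"
  unfolding pX_def by (intro continuous_intros)

lemma pX_curve:
  assumes "1 < Re w" "pX w = 0"
  shows "w \<in> Xcurve z"
proof -
  define u where "u = Re w"
  define v where "v = Im w"
  define r2 where "r2 = u^2 + v^2"
  have u1: "u > 1" using assms(1) by (simp add: u_def)
  have r2p: "r2 > 0" unfolding r2_def using u1 by (simp add: add_pos_nonneg)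
  define y where "y = 1 / r2"
  have yp: "y > 0" using r2p by (simp add: y_def)
  have eq0: "2*z*u*(r2 + 1) = r2" using assms(2) by (simp add: pX_def u_def v_def r2_def)
  have ue: "u * (2*z*(y+1)) = 1"
  proof -
    have "u * (2*z*(y+1)) = (2*z*u*(r2+1)) / r2" unfolding y_def using r2p by (simp add: field_simps)
    then show ?thesis using eq0 r2p by simp
  qed
  define a where "a = atil z y"
  have ap: "a > 0" unfolding a_def atil_def using yp z0 by simp
  have "- dtil z y = 4*z^2*y*(y+1)^2 - y^2" by (simp add: dtil_def atil_def btil_def ctil_def power2_eq_square algebra_simps)
  also have "\<dots> = v^2 * (2*a)^2"
  proof -
    have "v^2 = r2 - u^2" by (simp add: r2_def)
    have "v^2 * (2*a)^2 = (r2 - u^2) * (4*z^2*y^2*(y+1)^2)" unfolding \<open>v^2 = r2 - u^2\<close> a_def atil_def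
      by (simp add: power2_eq_square algebra_simps)
    also have "\<dots> = r2*y*(4*z^2*y*(y+1)^2) - y^2 * (u * (2*z*(y+1)))^2"
      by (simp add: power2_eq_square algebra_simps)
    also have "\<dots> = 4*z^2*y*(y+1)^2 - y^2" unfolding ue using r2p by (simp add: y_def)
    finally show ?thesis by simp
  qed
  finally have md: "- dtil z y = (\<bar>v\<bar> * (2*a))^2" by (simp add: power_mult_distrib)
  then have sq: "sqrt (- dtil z y) = \<bar>v\<bar> * (2*a)" using ap by simp
  define s :: real where "s = (if v \<ge> 0 then -1 else 1)"
  have sv: "- s * \<bar>v\<bar> = v" by (simp add: s_def)
  have ya: "y / (2*a) = u"
  proof -
    have "2*a = y * (2*z*(y+1))" by (simp add: a_def atil_def algebra_simps)
    then have "y / (2*a) = 1 / (2*z*(y+1))" using yp by simp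
    also have "\<dots> = u"
    proof -
      have c: "2*z*(y+1) \<noteq> 0" using z0 yp by simp
      have "u = u * (2*z*(y+1)) / (2*z*(y+1))" using c by simp
      then show ?thesis unfolding ue by simp
    qed
    finally show ?thesis .
  qed
  have "X0pm s z y = (of_real y - of_real s * \<i> * of_real (\<bar>v\<bar> * (2*a))) / of_real (2*a)"
    unfolding X0pm_def sq by (simp add: a_def btil_def)
  also have "\<dots> = of_real (y/(2*a)) + \<i> * of_real (- s * \<bar>v\<bar>)"
    using ap by (simp add: field_simps)
  also have "\<dots> = w" unfolding ya sv by (simp add: u_def v_def complex_eq_iff)
  finally have w: "X0pm s z y = w" .
  have "y \<le> y2 z"
  proof (rule ccontr)
    assume "\<not> y \<le> y2 z"
    have "0 \<le> (\<bar>v\<bar> * (2*a))^2" by simp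
    then have dn: "dtil z y \<le> 0" using md by linarith
    have "y < y3 z"
    proof (rule ccontr)
      assume "\<not> y < y3 z"
      then have "2*z*(1 + y3 z) \<le> 2*z*(1+y)" using z0 by simp
      moreover have "2*z*(1+y) < 1"
      proof -
        have "2*z*(y+1) = 1/u" using ue u1 by (simp add: field_simps)
        also have "\<dots> < 1" using u1 by simp
        finally show ?thesis by (simp add: add.commute)
      qed
      ultimately show False using y3_cross[OF z0 z1] by simp
    qed
    have "dtil z y = 4*z^2*y*(y - y2 z)*(y3 z - y)" unfolding dtil_fac_real[OF z0 z1] by (simp add: algebra_simps)
    moreover have "4*z^2*y*(y - y2 z)*(y3 z - y) > 0" using \<open>\<not> y \<le> y2 z\<close> \<open>y < y3 z\<close> yp z0 by simp
    ultimately have "dtil z y > 0" by simp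
    then show False using dn by simp
  qed
  moreover have "s \<in> {1, -1}" by (simp add: s_def)
  moreover have "atil z y \<noteq> 0" using ap by (simp add: a_def)
  ultimately have "\<exists>s' y'. w = X0pm s' z y' \<and> s' \<in> {1, -1} \<and> y' \<in> {y1 z..y2 z} \<and> atil z y' \<noteq> 0"
    using w yp by (intro exI[of _ s] exI[of _ y]) (simp add: y1_def)
  then show ?thesis unfolding Xcurve_def by simp
qed


lemma GX_closure: "closure (GX z) \<subseteq> - (complex_of_real ` {x3 z..x4 z})"
proof -
  define A where "A = {w. pX w < 0 \<or> Re w < 1}"
  define B where "B = {w. 1 < Re w \<and> 0 < pX w}"
  have cRe: "continuous_on UNIV (Re :: complex \<Rightarrow> real)" by (intro continuous_intros)
  have oA: "open A" unfolding A_def Collect_disj_eq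
    by (intro open_Un open_Collect_less pX_cont cRe continuous_on_const)
  have oB: "open B" unfolding B_def Collect_conj_eq
    by (intro open_Int open_Collect_less pX_cont cRe continuous_on_const)
  have AB: "A \<inter> B = {}" by (auto simp: A_def B_def)
  have cov: "- Xcurve z \<subseteq> A \<union> B"
  proof
    fix w assume w: "w \<in> - Xcurve z"
    show "w \<in> A \<union> B"
    proof (cases "pX w < 0 \<or> Re w < 1")
      case True then show ?thesis by (simp add: A_def)
    next
      case False
      then have p: "pX w \<ge> 0" "Re w \<ge> 1" by auto
      have "Re w \<noteq> 1"
      proof
        assume r: "Re w = 1"
        have "pX w = (4*z - 1) + (Im w)^2 * (2*z - 1)" unfolding pX_def r by (simp add: algebra_simps)
        moreover have "(Im w)^2 * (2*z - 1) \<le> 0" using z1 by (simp add: mult_nonneg_nonpos)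
        ultimately show False using p z1 by simp
      qed
      then have r1: "Re w > 1" using p by simp
      have "pX w \<noteq> 0" using pX_curve[OF r1] w by auto
      then show ?thesis using p r1 by (simp add: B_def)
    qed
  qed
  have "of_real (x1 z) \<in> A" using x1_lt1[OF z0 z1] by (simp add: A_def)
  from comp_sub[OF oA oB AB cov this] have GA: "GX z \<subseteq> A" unfolding GX_def .
  define C where "C = {w. pX w \<le> 0 \<or> Re w \<le> 1}"
  have cC: "closed C" unfolding C_def Collect_disj_eq
    by (intro closed_Un closed_Collect_le pX_cont cRe continuous_on_const)
  have "A \<subseteq> C" by (auto simp: A_def C_def)
  then have "closure (GX z) \<subseteq> C" using GA cC by (meson closure_minimal order_trans)
  moreover have "C \<inter> complex_of_real ` {x3 z..x4 z} = {}"
  proof -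
    have "of_real t \<notin> C" if t: "x3 z \<le> t" for t
    proof -
      have t1: "t > 1" using t x3_gt1[OF z0 z1] by simp
      have "2*z*t^2 - t + 2*z = 2*(z*(t - x2 z)*(t - x3 z)) + (1 - 4*z)*t"
        unfolding x23_poly[OF z0 z1] by (simp add: algebra_simps)
      moreover have "z*(t - x2 z)*(t - x3 z) \<ge> 0" using t x2_le_x3[OF z0 z1] z0 by simp
      moreover have "(1 - 4*z)*t > 0" using z1 t1 by simp
      ultimately have q: "2*z*t^2 - t + 2*z > 0" by linarith
      have "pX (of_real t) = t * (2*z*t^2 - t + 2*z)" by (simp add: pX_def algebra_simps power2_eq_square)
      also have "\<dots> > 0" using q t1 by simp
      finally show ?thesis using t1 by (simp add: C_def)
    qed
    then show ?thesis by auto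
  qed
  ultimately show ?thesis by blast
qed

definition phY :: "complex \<Rightarrow> real" where
  "phY w = 2*z*Re w - cmod w + z*(1 + (cmod w)^2)"

lemma phY_cont: "continuous_on UNIV phY"
  unfolding phY_def by (intro continuous_intros)

lemma phY_curve:
  assumes "1 < cmod w" "phY w = 0"
  shows "w \<in> Ycurve z"
proof -
  define \<rho> where "\<rho> = cmod w"
  define a where "a = Re w"
  define b where "b = Im w"
  define x where "x = 1 / \<rho>"
  have rp: "\<rho> > 1" using assms by (simp add: \<rho>_def)
  have xp: "x > 0" "x < 1" using rp by (auto simp: x_def)
  have xr: "x * \<rho> = 1" using rp by (simp add: x_def)
  have e0: "2*z*a = \<rho> - z*(1 + \<rho>^2)" using assms(2) by (simp add: phY_def a_def \<rho>_def)
  have rab: "\<rho>^2 = a^2 + b^2" by (simp add: \<rho>_def a_def b_def cmod_power2)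
  define k where "k = ak z x"
  have kp: "k > 0" using xp z0 by (simp add: k_def ak_def)
  have bk: "- bk z x = 2*k*a"
  proof -
    have "2*k*a = x^2 * (2*z*a)" by (simp add: k_def ak_def algebra_simps)
    also have "\<dots> = x^2*\<rho> - z*x^2 - z*(x*\<rho>)^2" unfolding e0 by (simp add: algebra_simps power2_eq_square)
    also have "\<dots> = x - z*x^2 - z" using xr by (simp add: power2_eq_square algebra_simps)
    finally show ?thesis by (simp add: bk_def)
  qed
  have md: "- dk z x = (\<bar>b\<bar> * (2*k))^2"
  proof -
    have "- dk z x = 4*z^2*x^2 - (bk z x)^2" by (simp add: dk_def ak_def ck_def power2_eq_square algebra_simps)
    also have "(bk z x)^2 = (2*k*a)^2" using bk by (metis minus_minus power2_minus)
    also have "4*z^2*x^2 = (2*k)^2 * \<rho>^2"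
    proof -
      have "(2*k)^2 * \<rho>^2 = 4*z^2*x^2*(x*\<rho>)^2" by (simp add: k_def ak_def power2_eq_square algebra_simps)
      then show ?thesis using xr by simp
    qed
    finally show ?thesis unfolding rab by (simp add: power2_eq_square algebra_simps)
  qed
  then have sq: "sqrt (- dk z x) = \<bar>b\<bar> * (2*k)" using kp by simp
  define s :: real where "s = (if b \<ge> 0 then -1 else 1)"
  have sv: "- s * \<bar>b\<bar> = b" by (simp add: s_def)
  have "Y0pm s z x = (of_real (2*k*a) - of_real s * \<i> * of_real (\<bar>b\<bar> * (2*k))) / of_real (2*k)"
    unfolding Y0pm_def sq bk[symmetric] by (simp add: k_def)
  also have "\<dots> = of_real a + \<i> * of_real (- s * \<bar>b\<bar>)"
    using kp by (simp add: field_simps)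
  also have "\<dots> = w" unfolding sv by (simp add: a_def b_def complex_eq_iff)
  finally have w: "Y0pm s z x = w" .
  have "dk z x \<le> 0"
  proof -
    have "0 \<le> (\<bar>b\<bar> * (2*k))^2" by simp
    then show ?thesis using md by linarith
  qed
  then have "(z*(x - x1 z)*(x - x4 z)) * (z*(x - x2 z)*(x - x3 z)) \<le> 0" unfolding dk_fac[OF z0 z1] .
  moreover have "(z*(x - x1 z)*(x - x4 z)) * (z*(x - x2 z)*(x - x3 z)) = ((x - x1 z)*(x - x2 z)) * (z^2*((x4 z - x)*(x3 z - x)))"
    by (simp add: algebra_simps power2_eq_square)
  moreover have "z^2*((x4 z - x)*(x3 z - x)) > 0" using xp x3_gt1[OF z0 z1] x3_le_x4[OF z0 z1] z0 by simp
  ultimately have le: "((x - x1 z)*(x - x2 z)) * (z^2*((x4 z - x)*(x3 z - x))) \<le> 0"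
    and qp: "z^2*((x4 z - x)*(x3 z - x)) > 0" by simp_all
  have "(x - x1 z)*(x - x2 z) \<le> 0"
  proof (rule ccontr)
    assume "\<not> (x - x1 z)*(x - x2 z) \<le> 0"
    then have "((x - x1 z)*(x - x2 z)) * (z^2*((x4 z - x)*(x3 z - x))) > 0" using qp by simp
    then show False using le by simp
  qed
  then have xin: "x1 z \<le> x \<and> x \<le> x2 z" using x1_le_x2 by (auto simp: mult_le_0_iff)
  have "\<exists>s' x'. w = Y0pm s' z x' \<and> s' \<in> {1, -1} \<and> x' \<in> {x1 z..x2 z}"
    using w xin by (intro exI[of _ s] exI[of _ x]) (simp add: s_def)
  then show ?thesis unfolding Ycurve_def by simp
qed

lemma GY_closure: "closure (GY z) \<subseteq> - (complex_of_real ` {y3 z..})"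
proof -
  define A where "A = {w. phY w < 0 \<or> cmod w < 1}"
  define B where "B = {w. 1 < cmod w \<and> 0 < phY w}"
  have cN: "continuous_on UNIV (cmod :: complex \<Rightarrow> real)" by (intro continuous_intros)
  have oA: "open A" unfolding A_def Collect_disj_eq
    by (intro open_Un open_Collect_less phY_cont cN continuous_on_const)
  have oB: "open B" unfolding B_def Collect_conj_eq
    by (intro open_Int open_Collect_less phY_cont cN continuous_on_const)
  have AB: "A \<inter> B = {}" by (auto simp: A_def B_def)
  have cov: "- Ycurve z \<subseteq> A \<union> B"
  proof
    fix w assume w: "w \<in> - Ycurve z"
    show "w \<in> A \<union> B"
    proof (cases "phY w < 0 \<or> cmod w < 1")
      case True then show ?thesis by (simp add: A_def)
    next
      case False
      then have p: "phY w \<ge> 0" "cmod w \<ge> 1" by auto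
      have "cmod w \<noteq> 1"
      proof
        assume r: "cmod w = 1"
        have "Re w \<le> 1" using complex_Re_le_cmod[of w] r by simp
        then have "2*z*Re w \<le> 2*z" using z0 by simp
        then have "phY w \<le> 4*z - 1" unfolding phY_def r by simp
        then show False using p z1 by simp
      qed
      then have r1: "cmod w > 1" using p by simp
      have "phY w \<noteq> 0" using phY_curve[OF r1] w by auto
      then show ?thesis using p r1 by (simp add: B_def)
    qed
  qed
  have "complex_of_real (y1 z) \<in> A" by (simp add: A_def y1_def)
  from comp_sub[OF oA oB AB cov this] have GA: "GY z \<subseteq> A" unfolding GY_def .
  define C where "C = {w. phY w \<le> 0 \<or> cmod w \<le> 1}"
  have cC: "closed C" unfolding C_def Collect_disj_eq
    by (intro closed_Un closed_Collect_le phY_cont cN continuous_on_const)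
  have "A \<subseteq> C" by (auto simp: A_def C_def)
  then have "closure (GY z) \<subseteq> C" using GA cC by (meson closure_minimal order_trans)
  moreover have "C \<inter> complex_of_real ` {y3 z..} = {}"
  proof -
    have "of_real t \<notin> C" if t: "y3 z \<le> t" for t
    proof -
      have t1: "t > 1" using t y3_gt1[OF z0 z1] by simp
      have "4*z^2*(t+1)^2 - t = 4*z^2*((t - y2 z)*(t - y3 z))" using y_poly[OF z0 z1, of t] by (simp add: algebra_simps)
      moreover have "(t - y2 z)*(t - y3 z) \<ge> 0" using t y23_lt[OF z0 z1] by simp
      moreover have "4*z^2*((t - y2 z)*(t - y3 z)) \<ge> 0" using \<open>(t - y2 z)*(t - y3 z) \<ge> 0\<close> by simp
      ultimately have "4*z^2*(t+1)^2 \<ge> t" by linarith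
      moreover have "4*z*(z*(t+1)^2) = 4*z^2*(t+1)^2" by (simp add: power2_eq_square mult_ac)
      ultimately have "4*z*(z*(t+1)^2) \<ge> t" by linarith
      moreover have "4*z*(z*(t+1)^2) < z*(t+1)^2"
      proof -
        have cp: "z*(t+1)^2 > 0" using z0 t1 by simp
        have "(4*z)*(z*(t+1)^2) < 1*(z*(t+1)^2)" using z1 cp by (intro mult_strict_right_mono) auto
        then show ?thesis by simp
      qed
      ultimately have q: "z*(t+1)^2 - t > 0" by linarith
      have "phY (of_real t) = z*(t+1)^2 - t" using t1 by (simp add: phY_def algebra_simps power2_eq_square)
      then show ?thesis using q t1 by (simp add: C_def)
    qed
    then show ?thesis by auto
  qed
  ultimately show ?thesis by blast
qed

end


theorem lemma4:
  fixes z :: real and F G :: "complex \<Rightarrow> complex"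
  assumes z: "0 < z" "z < 1/4"
    and F_hol: "F holomorphic_on (- (complex_of_real ` {x3 z..x4 z}))"
    and F_ext: "\<And>x. cmod x < 1 \<Longrightarrow> F x = complex_of_real z * Qgf x 0 z"
    and G_hol: "G holomorphic_on (- (complex_of_real ` {y3 z..}))"
    and G_ext: "\<And>y. cmod y < 1 \<Longrightarrow> G y = complex_of_real z * (y + 1) * Qgf 0 y z"
  shows "F holomorphic_on GX z \<and> continuous_on (closure (GX z)) F \<and>
         (\<forall>t\<in>Xcurve z. F t - F (cnj t) = t * Y0 z t - cnj t * Y0 z (cnj t)) \<and>
         G holomorphic_on GY z \<and> continuous_on (closure (GY z)) G \<and>
         (\<forall>t\<in>Ycurve z. G t - G (cnj t) = X0 z t * t - X0 z (cnj t) * cnj t)"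
proof -
  note z0 = z(1) and z1 = z(2)
  note cX = GX_closure[OF z0 z1] and cY = GY_closure[OF z0 z1]
  have h1: "F holomorphic_on GX z"
    by (rule holomorphic_on_subset[OF F_hol]) (use cX closure_subset in blast)
  have h2: "continuous_on (closure (GX z)) F"
    by (rule continuous_on_subset[OF holomorphic_on_imp_continuous_on[OF F_hol] cX])
  have h4: "G holomorphic_on GY z"
    by (rule holomorphic_on_subset[OF G_hol]) (use cY closure_subset in blast)
  have h5: "continuous_on (closure (GY z)) G"
    by (rule continuous_on_subset[OF holomorphic_on_imp_continuous_on[OF G_hol] cY])
  have h3: "F t - F (cnj t) = t * Y0 z t - cnj t * Y0 z (cnj t)" if t: "t \<in> Xcurve z" for t
  proof -
    obtain s y where ty: "t = X0pm s z y" and s: "s \<in> {1, -1}" and y: "y \<in> {y1 z..y2 z}"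
      and a: "atil z y \<noteq> 0"
      using t unfolding Xcurve_def by blast
    show ?thesis
    proof (cases "Im t = 0")
      case True
      then have "cnj t = t" by (simp add: complex_eq_iff)
      then show ?thesis by simp
    next
      case False
      have y0: "0 < y" using y a by (cases "y = 0") (auto simp: y1_def atil_def)
      have yl: "y < y2 z"
      proof (rule ccontr)
        assume "\<not> y < y2 z"
        then have "y = y2 z" using y by simp
        then have "dtil z y = 0" by (simp add: dtil_fac_real[OF z0 z1])
        then have "Im t = 0" unfolding ty X0pm_def by (simp add: Im_divide_of_real)
        then show False using False by simp
      qed
      have s1: "s = 1 \<or> s = -1" and s2: "-s = 1 \<or> -s = -1" using s by auto
      have ss: "s^2 = 1" "(-s)^2 = 1" using s by auto
      have r1: "F t + G (of_real y) - t * of_real y = F 0"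
        unfolding ty by (rule rel_X[OF z0 z1 F_hol F_ext G_hol G_ext y0 yl s1])
      have r2: "F (cnj t) + G (of_real y) - cnj t * of_real y = F 0"
        unfolding ty cnj_X0pm[OF z0 z1] by (rule rel_X[OF z0 z1 F_hol F_ext G_hol G_ext y0 yl s2])
      have y1: "Y0 z t = of_real y" unfolding ty by (rule Y0_at_X0pm[OF z0 z1 y0 yl ss(1)])
      have y2: "Y0 z (cnj t) = of_real y" unfolding ty cnj_X0pm[OF z0 z1] by (rule Y0_at_X0pm[OF z0 z1 y0 yl ss(2)])
      have "F t - F (cnj t) = (F t + G (of_real y) - t * of_real y) - (F (cnj t) + G (of_real y) - cnj t * of_real y)
          + (t * of_real y - cnj t * of_real y)" by (simp add: algebra_simps)
      also have "\<dots> = t * of_real y - cnj t * of_real y" unfolding r1 r2 by simp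
      finally show ?thesis unfolding y1 y2 .
    qed
  qed
  have h6: "G t - G (cnj t) = X0 z t * t - X0 z (cnj t) * cnj t" if t: "t \<in> Ycurve z" for t
  proof -
    obtain s x where ty: "t = Y0pm s z x" and s: "s \<in> {1, -1}" and x: "x \<in> {x1 z..x2 z}"
      using t unfolding Ycurve_def by blast
    show ?thesis
    proof (cases "Im t = 0")
      case True
      then have "cnj t = t" by (simp add: complex_eq_iff)
      then show ?thesis by simp
    next
      case False
      have xx: "x1 z \<le> x" "x \<le> x2 z" using x by auto
      have ss: "s^2 = 1" "(-s)^2 = 1" using s by auto
      have i1: "Im (Y0pm s z x) \<noteq> 0" using False ty by simp
      have i2: "Im (Y0pm (-s) z x) \<noteq> 0" using False ty cnj_Y0pm[OF z0 z1, of s x] by (metis complex_cnj_cancel_iff complex_cnj_zero_iff complex_eq_iff cnj.sel(2) neg_equal_0_iff_equal zero_complex.sel(2))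
      have r1: "F (of_real x) + G t - of_real x * t = F 0"
        unfolding ty by (rule rel_Y[OF z0 z1 F_hol F_ext G_hol G_ext xx ss(1) i1])
      have r2: "F (of_real x) + G (cnj t) - of_real x * cnj t = F 0"
        unfolding ty cnj_Y0pm[OF z0 z1] by (rule rel_Y[OF z0 z1 F_hol F_ext G_hol G_ext xx ss(2) i2])
      have e1: "X0 z t = of_real x" unfolding ty by (rule X0_at_Y0pm[OF z0 z1 xx ss(1)])
      have e2: "X0 z (cnj t) = of_real x" unfolding ty cnj_Y0pm[OF z0 z1] by (rule X0_at_Y0pm[OF z0 z1 xx ss(2)])
      have "G t - G (cnj t) = (F (of_real x) + G t - of_real x * t) - (F (of_real x) + G (cnj t) - of_real x * cnj t)
          + (of_real x * t - of_real x * cnj t)" by (simp add: algebra_simps)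
      also have "\<dots> = of_real x * t - of_real x * cnj t" unfolding r1 r2 by simp
      finally show ?thesis unfolding e1 e2 .
    qed
  qed
  show ?thesis using h1 h2 h3 h4 h5 h6 by blast
qed

end
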